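(* Let $(\mathbf A,G,H)$ be a tense Pavelka algebra whose underlying Pavelka algebra $\mathbf A$ is semisimple, and let $R\colon\mathrm{Spec_M}\mathbf A\times\mathrm{Spec_M}\mathbf A\to[0,1]$, $R(F,F')=\bigwedge_{a\in A}(G(a)/F'\rightarrow a/F)$, be its natural time frame relation. Then: (i) $R$ is reflexive if and only if $G(x)\le x$ for all $x\in A$ (equivalently, if and only if $H(x)\le x$ for all $x\in A$); (ii) $R$ is symmetric if and only if $H=G$; (iii) $R$ is transitive if and only if $G(x)\le G(G(x))$ for all $x\in A$ (equivalently, if and only if $H(x)\le H(H(x))$ for all $x\in A$).
   Context: An MV-algebra $(A;\oplus,\neg,0)$ carries derived operations $1=\neg0$, $x\cdot y=\neg(\neg x\oplus\neg y)$, $x\rightarrow y=\neg x\oplus y$, $x\wedge y$, $x\vee y$ (lattice operations of the order $x\le y$ iff $\neg x\oplus y=1$). The standard MV-algebra is $[0,1]$ with $x\oplus y=\min\{x+y,1\}$, $\neg x=1-x$. A Pavelka algebra is $\mathbf A=(A;\oplus,\neg,\{\mathbf r\mid r\in[0,1]\cap\mathbb Q\})$ with $(A;\oplus,\neg,\mathbf 0)$ an MV-algebra, $\mathbf r\oplus\mathbf s=\mathbf t$ whenever $\min\{r+s,1\}=t$, $\neg\mathbf r=\mathbf s$ whenever $1-r=s$. Filters are filters of the MV-reduct; $\mathrm{Spec_M}\mathbf A$ is the set of maximal proper filters; $\mathbf A/F$ embeds uniquely into $[0,1]$ and $x/F$ is identified with its image. Semisimple: MV-reduct is a subdirect product of simple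 MV-algebras. A tense Pavelka algebra is $(\mathbf A,G,H)$ with $G,H\colon A\to A$ such that for all $x,y$ and constants $\mathbf r$: (PT1) $G(x\wedge y)=G(x)\wedge G(y)$, $H(x\wedge y)=H(x)\wedge H(y)$; (PT2) $\mathbf r\rightarrow G(x)=G(\mathbf r\rightarrow x)$, $\mathbf r\rightarrow H(x)=H(\mathbf r\rightarrow x)$; (PT3) $\neg H(\neg G(x))\le x$, $\neg G(\neg H(x))\le x$. A fuzzy relation $R\colon T\times T\to[0,1]$ is reflexive if $R(t,t)=1$, symmetric if $R(s,t)=R(t,s)$, transitive if $R(s,t)\cdot R(t,u)\le R(s,u)$ for all $s,t,u$. *)

theory Defs
  imports "HOL-Analysis.Analysis"
begin

text \<open>An algebra is given by a carrier A, operations oplus, neg and the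
  Pavelka constants c r (r rational in [0,1]); the MV zero is c 0.\<close>

definition mv_algebra :: "'a set \<Rightarrow> ('a \<Rightarrow> 'a \<Rightarrow> 'a) \<Rightarrow> ('a \<Rightarrow> 'a) \<Rightarrow> 'a \<Rightarrow> bool" where
  "mv_algebra A oplus neg z \<longleftrightarrow>
     z \<in> A \<and>
     (\<forall>x\<in>A. \<forall>y\<in>A. oplus x y \<in> A) \<and> (\<forall>x\<in>A. neg x \<in> A) \<and>
     (\<forall>x\<in>A. \<forall>y\<in>A. \<forall>w\<in>A. oplus x (oplus y w) = oplus (oplus x y) w) \<and>
     (\<forall>x\<in>A. \<forall>y\<in>A. oplus x y = oplus y x) \<and>
     (\<forall>x\<in>A. oplus x z = x) \<and>
     (\<forall>x\<in>A. neg (neg x) = x) \<and>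
     (\<forall>x\<in>A. oplus x (neg z) = neg z) \<and>
     (\<forall>x\<in>A. \<forall>y\<in>A. oplus (neg (oplus (neg x) y)) y = oplus (neg (oplus (neg y) x)) x)"

definition mv_one :: "('a \<Rightarrow> 'a) \<Rightarrow> 'a \<Rightarrow> 'a" where
  "mv_one neg z = neg z"

definition mv_mult :: "('a \<Rightarrow> 'a \<Rightarrow> 'a) \<Rightarrow> ('a \<Rightarrow> 'a) \<Rightarrow> 'a \<Rightarrow> 'a \<Rightarrow> 'a" where
  "mv_mult oplus neg x y = neg (oplus (neg x) (neg y))"

definition mv_imp :: "('a \<Rightarrow> 'a \<Rightarrow> 'a) \<Rightarrow> ('a \<Rightarrow> 'a) \<Rightarrow> 'a \<Rightarrow> 'a \<Rightarrow> 'a" where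
  "mv_imp oplus neg x y = oplus (neg x) y"

definition mv_sup :: "('a \<Rightarrow> 'a \<Rightarrow> 'a) \<Rightarrow> ('a \<Rightarrow> 'a) \<Rightarrow> 'a \<Rightarrow> 'a \<Rightarrow> 'a" where
  "mv_sup oplus neg x y = oplus (neg (oplus (neg x) y)) y"

definition mv_inf :: "('a \<Rightarrow> 'a \<Rightarrow> 'a) \<Rightarrow> ('a \<Rightarrow> 'a) \<Rightarrow> 'a \<Rightarrow> 'a \<Rightarrow> 'a" where
  "mv_inf oplus neg x y = neg (mv_sup oplus neg (neg x) (neg y))"

definition mv_le :: "('a \<Rightarrow> 'a \<Rightarrow> 'a) \<Rightarrow> ('a \<Rightarrow> 'a) \<Rightarrow> 'a \<Rightarrow> 'a \<Rightarrow> 'a \<Rightarrow> bool" where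
  "mv_le oplus neg z x y \<longleftrightarrow> oplus (neg x) y = neg z"

definition pavelka_algebra :: "'a set \<Rightarrow> ('a \<Rightarrow> 'a \<Rightarrow> 'a) \<Rightarrow> ('a \<Rightarrow> 'a) \<Rightarrow> (rat \<Rightarrow> 'a) \<Rightarrow> bool" where
  "pavelka_algebra A oplus neg c \<longleftrightarrow>
     mv_algebra A oplus neg (c 0) \<and>
     (\<forall>r. 0 \<le> r \<and> r \<le> 1 \<longrightarrow> c r \<in> A) \<and>
     (\<forall>r s. 0 \<le> r \<and> r \<le> 1 \<and> 0 \<le> s \<and> s \<le> 1 \<longrightarrow> oplus (c r) (c s) = c (min (r + s) 1)) \<and>
     (\<forall>r. 0 \<le> r \<and> r \<le> 1 \<longrightarrow> neg (c r) = c (1 - r))"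

definition mv_filter :: "'a set \<Rightarrow> ('a \<Rightarrow> 'a \<Rightarrow> 'a) \<Rightarrow> ('a \<Rightarrow> 'a) \<Rightarrow> 'a \<Rightarrow> 'a set \<Rightarrow> bool" where
  "mv_filter A oplus neg z F \<longleftrightarrow>
     F \<subseteq> A \<and> neg z \<in> F \<and>
     (\<forall>x\<in>F. \<forall>y\<in>F. mv_mult oplus neg x y \<in> F) \<and>
     (\<forall>x\<in>F. \<forall>y\<in>A. mv_le oplus neg z x y \<longrightarrow> y \<in> F)"

definition max_filters :: "'a set \<Rightarrow> ('a \<Rightarrow> 'a \<Rightarrow> 'a) \<Rightarrow> ('a \<Rightarrow> 'a) \<Rightarrow> 'a \<Rightarrow> 'a set set" where
  "max_filters A oplus neg z =
     {F. mv_filter A oplus neg z F \<and> F \<noteq> A \<and>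
         (\<forall>F'. mv_filter A oplus neg z F' \<and> F' \<noteq> A \<and> F \<subseteq> F' \<longrightarrow> F' = F)}"

definition semisimple :: "'a set \<Rightarrow> ('a \<Rightarrow> 'a \<Rightarrow> 'a) \<Rightarrow> ('a \<Rightarrow> 'a) \<Rightarrow> 'a \<Rightarrow> bool" where
  "semisimple A oplus neg z \<longleftrightarrow>
     {x\<in>A. \<forall>F\<in>max_filters A oplus neg z. x \<in> F} = {neg z}"

definition std_hom :: "'a set \<Rightarrow> ('a \<Rightarrow> 'a \<Rightarrow> 'a) \<Rightarrow> ('a \<Rightarrow> 'a) \<Rightarrow> 'a \<Rightarrow> ('a \<Rightarrow> real) \<Rightarrow> bool" where
  "std_hom A oplus neg z h \<longleftrightarrow>
     (\<forall>x\<in>A. 0 \<le> h x \<and> h x \<le> 1) \<and> h z = 0 \<and>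
     (\<forall>x\<in>A. h (neg x) = 1 - h x) \<and>
     (\<forall>x\<in>A. \<forall>y\<in>A. h (oplus x y) = min (h x + h y) 1)"

text \<open>x/F identified with its image under the (unique) embedding of A/F into [0,1],
  i.e. under the homomorphism A \<rightarrow> [0,1] whose kernel filter is F.\<close>
definition quot_val :: "'a set \<Rightarrow> ('a \<Rightarrow> 'a \<Rightarrow> 'a) \<Rightarrow> ('a \<Rightarrow> 'a) \<Rightarrow> 'a \<Rightarrow> 'a set \<Rightarrow> 'a \<Rightarrow> real" where
  "quot_val A oplus neg z F x =
     (THE v. \<exists>h. std_hom A oplus neg z h \<and> {y\<in>A. h y = 1} = F \<and> h x = v)"

definition tense_pavelka :: "'a set \<Rightarrow> ('a \<Rightarrow> 'a \<Rightarrow> 'a) \<Rightarrow> ('a \<Rightarrow> 'a) \<Rightarrow> (rat \<Rightarrow> 'a)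
    \<Rightarrow> ('a \<Rightarrow> 'a) \<Rightarrow> ('a \<Rightarrow> 'a) \<Rightarrow> bool" where
  "tense_pavelka A oplus neg c G H \<longleftrightarrow>
     pavelka_algebra A oplus neg c \<and>
     (\<forall>x\<in>A. G x \<in> A \<and> H x \<in> A) \<and>
     (\<forall>x\<in>A. \<forall>y\<in>A. G (mv_inf oplus neg x y) = mv_inf oplus neg (G x) (G y) \<and>
                    H (mv_inf oplus neg x y) = mv_inf oplus neg (H x) (H y)) \<and>
     (\<forall>r. \<forall>x\<in>A. 0 \<le> r \<and> r \<le> 1 \<longrightarrow>
          mv_imp oplus neg (c r) (G x) = G (mv_imp oplus neg (c r) x) \<and>
          mv_imp oplus neg (c r) (H x) = H (mv_imp oplus neg (c r) x)) \<and>
     (\<forall>x\<in>A. mv_le oplus neg (c 0) (neg (H (neg (G x)))) x \<and>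
             mv_le oplus neg (c 0) (neg (G (neg (H x)))) x)"

definition luk_imp :: "real \<Rightarrow> real \<Rightarrow> real" where
  "luk_imp u v = min 1 (1 - u + v)"

definition luk_mult :: "real \<Rightarrow> real \<Rightarrow> real" where
  "luk_mult u v = max 0 (u + v - 1)"

definition time_rel :: "'a set \<Rightarrow> ('a \<Rightarrow> 'a \<Rightarrow> 'a) \<Rightarrow> ('a \<Rightarrow> 'a) \<Rightarrow> 'a \<Rightarrow> ('a \<Rightarrow> 'a)
    \<Rightarrow> 'a set \<Rightarrow> 'a set \<Rightarrow> real" where
  "time_rel A oplus neg z G F F' =
     (INF a\<in>A. luk_imp (quot_val A oplus neg z F' (G a)) (quot_val A oplus neg z F a))"

definition fuzzy_refl :: "'b set \<Rightarrow> ('b \<Rightarrow> 'b \<Rightarrow> real) \<Rightarrow> bool" where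
  "fuzzy_refl T R \<longleftrightarrow> (\<forall>t\<in>T. R t t = 1)"

definition fuzzy_sym :: "'b set \<Rightarrow> ('b \<Rightarrow> 'b \<Rightarrow> real) \<Rightarrow> bool" where
  "fuzzy_sym T R \<longleftrightarrow> (\<forall>s\<in>T. \<forall>t\<in>T. R s t = R t s)"

definition fuzzy_trans :: "'b set \<Rightarrow> ('b \<Rightarrow> 'b \<Rightarrow> real) \<Rightarrow> bool" where
  "fuzzy_trans T R \<longleftrightarrow> (\<forall>s\<in>T. \<forall>t\<in>T. \<forall>u\<in>T. luk_mult (R s t) (R t u) \<le> R s u)"

end

theory Submission
  imports Defs
begin


locale mvl =
  fixes A :: "'a set" and pl :: "'a \<Rightarrow> 'a \<Rightarrow> 'a" (infixl "\<oplus>" 65) and ng :: "'a \<Rightarrow> 'a" and z :: 'a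
  assumes mvalg: "mv_algebra A pl ng z"
begin

lemma zA[simp]: "z \<in> A" using mvalg unfolding mv_algebra_def by blast
lemma plA[simp]: "x \<in> A \<Longrightarrow> y \<in> A \<Longrightarrow> x \<oplus> y \<in> A" using mvalg unfolding mv_algebra_def by blast
lemma ngA[simp]: "x \<in> A \<Longrightarrow> ng x \<in> A" using mvalg unfolding mv_algebra_def by blast
lemma assoc: "x \<in> A \<Longrightarrow> y \<in> A \<Longrightarrow> w \<in> A \<Longrightarrow> x \<oplus> (y \<oplus> w) = (x \<oplus> y) \<oplus> w"
  using mvalg unfolding mv_algebra_def by blast
lemma comm: "x \<in> A \<Longrightarrow> y \<in> A \<Longrightarrow> x \<oplus> y = y \<oplus> x" using mvalg unfolding mv_algebra_def by blast
lemma zr[simp]: "x \<in> A \<Longrightarrow> x \<oplus> z = x" using mvalg unfolding mv_algebra_def by blast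
lemma nn[simp]: "x \<in> A \<Longrightarrow> ng (ng x) = x" using mvalg unfolding mv_algebra_def by blast
lemma oner[simp]: "x \<in> A \<Longrightarrow> x \<oplus> ng z = ng z" using mvalg unfolding mv_algebra_def by blast
lemma luk: "x \<in> A \<Longrightarrow> y \<in> A \<Longrightarrow> ng (ng x \<oplus> y) \<oplus> y = ng (ng y \<oplus> x) \<oplus> x"
  using mvalg unfolding mv_algebra_def by blast

abbreviation one where "one \<equiv> ng z"
abbreviation mul (infixl "\<odot>" 70) where "x \<odot> y \<equiv> mv_mult (\<oplus>) ng x y"
abbreviation lq (infix "\<preceq>" 50) where "x \<preceq> y \<equiv> mv_le (\<oplus>) ng z x y"
abbreviation jn where "jn x y \<equiv> mv_sup (\<oplus>) ng x y"
abbreviation mt where "mt x y \<equiv> mv_inf (\<oplus>) ng x y"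
abbreviation imp where "imp x y \<equiv> mv_imp (\<oplus>) ng x y"

lemma mul_def: "x \<odot> y = ng (ng x \<oplus> ng y)" by (simp add: mv_mult_def)
lemma lq_def: "x \<preceq> y \<longleftrightarrow> ng x \<oplus> y = one" by (simp add: mv_le_def)
lemma jn_def: "jn x y = ng (ng x \<oplus> y) \<oplus> y" by (simp add: mv_sup_def)
lemma imp_def: "imp x y = ng x \<oplus> y" by (simp add: mv_imp_def)

lemma oneA[simp]: "one \<in> A" by simp
lemma mulA[simp]: "x \<in> A \<Longrightarrow> y \<in> A \<Longrightarrow> x \<odot> y \<in> A" by (simp add: mul_def)
lemma jnA[simp]: "x \<in> A \<Longrightarrow> y \<in> A \<Longrightarrow> jn x y \<in> A" by (simp add: jn_def)
lemma mtA[simp]: "x \<in> A \<Longrightarrow> y \<in> A \<Longrightarrow> mt x y \<in> A" by (simp add: mv_inf_def jn_def)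
lemma impA[simp]: "x \<in> A \<Longrightarrow> y \<in> A \<Longrightarrow> imp x y \<in> A" by (simp add: imp_def)

lemma zl[simp]: "x \<in> A \<Longrightarrow> z \<oplus> x = x" by (metis comm zA zr)
lemma onel[simp]: "x \<in> A \<Longrightarrow> ng z \<oplus> x = ng z" by (metis comm zA ngA oner)
lemma ngone[simp]: "ng one = z" by simp
lemma xnx[simp]: "x \<in> A \<Longrightarrow> x \<oplus> ng x = one"
proof -
  assume x: "x \<in> A"
  have "ng (ng x \<oplus> one) \<oplus> one = ng (ng one \<oplus> x) \<oplus> x" using luk[OF x oneA] .
  then show ?thesis using x by (simp add: comm)
qed
lemma nxx[simp]: "x \<in> A \<Longrightarrow> ng x \<oplus> x = one" by (metis comm ngA xnx)

lemma mul_comm: "x \<in> A \<Longrightarrow> y \<in> A \<Longrightarrow> x \<odot> y = y \<odot> x" by (simp add: mul_def comm)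
lemma mul_assoc: "x \<in> A \<Longrightarrow> y \<in> A \<Longrightarrow> w \<in> A \<Longrightarrow> x \<odot> (y \<odot> w) = (x \<odot> y) \<odot> w"
  by (simp add: mul_def assoc)
lemma mul_one[simp]: "x \<in> A \<Longrightarrow> x \<odot> one = x" by (simp add: mul_def)
lemma one_mul[simp]: "x \<in> A \<Longrightarrow> one \<odot> x = x" by (simp add: mul_def)
lemma mul_z[simp]: "x \<in> A \<Longrightarrow> x \<odot> z = z" by (simp add: mul_def)
lemma z_mul[simp]: "x \<in> A \<Longrightarrow> z \<odot> x = z" by (simp add: mul_def)
lemma mul_nx[simp]: "x \<in> A \<Longrightarrow> x \<odot> ng x = z" by (simp add: mul_def comm)
lemma ng_mul: "x \<in> A \<Longrightarrow> y \<in> A \<Longrightarrow> ng (x \<odot> y) = ng x \<oplus> ng y" by (simp add: mul_def)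
lemma ng_pl: "x \<in> A \<Longrightarrow> y \<in> A \<Longrightarrow> ng (x \<oplus> y) = ng x \<odot> ng y" by (simp add: mul_def)
lemma ng_inj: "x \<in> A \<Longrightarrow> y \<in> A \<Longrightarrow> ng x = ng y \<longleftrightarrow> x = y" by (metis nn)

lemma lq_mul: "x \<in> A \<Longrightarrow> y \<in> A \<Longrightarrow> x \<preceq> y \<longleftrightarrow> x \<odot> ng y = z"
  by (simp add: lq_def mul_def) (metis ngA nn plA ngone)

lemma lq_ex: "x \<in> A \<Longrightarrow> y \<in> A \<Longrightarrow> x \<preceq> y \<Longrightarrow> y = x \<oplus> (y \<odot> ng x)"
proof -
  assume x: "x \<in> A" and y: "y \<in> A" and l: "x \<preceq> y"
  have "x \<oplus> (y \<odot> ng x) = ng (ng y \<oplus> x) \<oplus> x" using x y by (simp add: mul_def comm)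
  also have "\<dots> = ng (ng x \<oplus> y) \<oplus> y" using luk[OF x y] by simp
  also have "\<dots> = y" using l y by (simp add: lq_def)
  finally show ?thesis by simp
qed

lemma lq_pl: "x \<in> A \<Longrightarrow> w \<in> A \<Longrightarrow> x \<preceq> x \<oplus> w"
  by (simp add: lq_def assoc)
lemma lq_pl2: "x \<in> A \<Longrightarrow> w \<in> A \<Longrightarrow> x \<preceq> w \<oplus> x"
  by (metis comm lq_pl)
lemma lq_exI: "x \<in> A \<Longrightarrow> w \<in> A \<Longrightarrow> y = x \<oplus> w \<Longrightarrow> x \<preceq> y" using lq_pl by blast

lemma lq_refl[simp]: "x \<in> A \<Longrightarrow> x \<preceq> x" by (simp add: lq_def)
lemma lq_antisym: "x \<in> A \<Longrightarrow> y \<in> A \<Longrightarrow> x \<preceq> y \<Longrightarrow> y \<preceq> x \<Longrightarrow> x = y"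
  by (metis lq_ex lq_mul zr)
lemma lq_trans: "x \<in> A \<Longrightarrow> y \<in> A \<Longrightarrow> w \<in> A \<Longrightarrow> x \<preceq> y \<Longrightarrow> y \<preceq> w \<Longrightarrow> x \<preceq> w"
proof -
  assume a: "x \<in> A" "y \<in> A" "w \<in> A" "x \<preceq> y" "y \<preceq> w"
  then have "y = x \<oplus> (y \<odot> ng x)" "w = y \<oplus> (w \<odot> ng y)" by (auto intro: lq_ex)
  then have "w = x \<oplus> ((y \<odot> ng x) \<oplus> (w \<odot> ng y))" using a by (metis assoc mulA ngA)
  then show ?thesis using a by (metis lq_pl mulA ngA plA)
qed
lemma z_lq[simp]: "x \<in> A \<Longrightarrow> z \<preceq> x" by (simp add: lq_def)
lemma lq_one[simp]: "x \<in> A \<Longrightarrow> x \<preceq> one" by (simp add: lq_def)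
lemma pl_mono: "x \<in> A \<Longrightarrow> y \<in> A \<Longrightarrow> w \<in> A \<Longrightarrow> x \<preceq> y \<Longrightarrow> x \<oplus> w \<preceq> y \<oplus> w"
proof -
  assume a: "x \<in> A" "y \<in> A" "w \<in> A" "x \<preceq> y"
  then have "y \<oplus> w = (x \<oplus> w) \<oplus> (y \<odot> ng x)" by (metis lq_ex assoc comm mulA ngA)
  then show ?thesis using a by (metis lq_pl mulA ngA plA)
qed
lemma pl_mono2: "x \<in> A \<Longrightarrow> y \<in> A \<Longrightarrow> w \<in> A \<Longrightarrow> x \<preceq> y \<Longrightarrow> w \<oplus> x \<preceq> w \<oplus> y"
  by (metis comm pl_mono)
lemma ng_anti: "x \<in> A \<Longrightarrow> y \<in> A \<Longrightarrow> x \<preceq> y \<Longrightarrow> ng y \<preceq> ng x"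
  by (simp add: lq_def comm)
lemma ng_anti_iff: "x \<in> A \<Longrightarrow> y \<in> A \<Longrightarrow> ng y \<preceq> ng x \<longleftrightarrow> x \<preceq> y"
  by (metis ng_anti nn ngA)
lemma mul_mono: "x \<in> A \<Longrightarrow> y \<in> A \<Longrightarrow> w \<in> A \<Longrightarrow> x \<preceq> y \<Longrightarrow> x \<odot> w \<preceq> y \<odot> w"
  by (simp add: mul_def ng_anti pl_mono)
lemma mul_mono2: "x \<in> A \<Longrightarrow> y \<in> A \<Longrightarrow> w \<in> A \<Longrightarrow> x \<preceq> y \<Longrightarrow> w \<odot> x \<preceq> w \<odot> y"
  by (metis mul_comm mul_mono)
lemma mul_lq: "x \<in> A \<Longrightarrow> y \<in> A \<Longrightarrow> x \<odot> y \<preceq> x"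
  by (metis mul_mono2 lq_one mul_one oneA)
lemma mul_lq2: "x \<in> A \<Longrightarrow> y \<in> A \<Longrightarrow> x \<odot> y \<preceq> y"
  by (metis mul_comm mul_lq)

lemma resid: "x \<in> A \<Longrightarrow> y \<in> A \<Longrightarrow> w \<in> A \<Longrightarrow> x \<odot> y \<preceq> w \<longleftrightarrow> x \<preceq> ng y \<oplus> w"
  by (simp add: lq_def mul_def assoc)

lemma jn_comm: "x \<in> A \<Longrightarrow> y \<in> A \<Longrightarrow> jn x y = jn y x" by (simp add: jn_def luk)
lemma jn_ub2: "x \<in> A \<Longrightarrow> y \<in> A \<Longrightarrow> y \<preceq> jn x y" by (simp add: jn_def lq_pl2)
lemma jn_ub1: "x \<in> A \<Longrightarrow> y \<in> A \<Longrightarrow> x \<preceq> jn x y" by (metis jn_comm jn_ub2)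
lemma jn_lq_eq: "x \<in> A \<Longrightarrow> y \<in> A \<Longrightarrow> x \<preceq> y \<Longrightarrow> jn x y = y" by (simp add: jn_def lq_def)
lemma jn_lub: "x \<in> A \<Longrightarrow> y \<in> A \<Longrightarrow> w \<in> A \<Longrightarrow> x \<preceq> w \<Longrightarrow> y \<preceq> w \<Longrightarrow> jn x y \<preceq> w"
proof -
  assume x: "x \<in> A" and y: "y \<in> A" and w: "w \<in> A" and xw: "x \<preceq> w" and yw: "y \<preceq> w"
  define p where "p = ng x \<oplus> y"
  define q where "q = ng w \<oplus> y"
  have pA: "p \<in> A" and qA: "q \<in> A" using x y w by (auto simp: p_def q_def)
  have wq: "w = ng q \<oplus> y" using luk[OF w y] yw y w by (simp add: q_def lq_def)
  have qp: "q \<preceq> p" unfolding p_def q_def using x y w xw by (metis ng_anti ngA pl_mono)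
  have "ng (jn x y) \<oplus> w = ng (ng p \<oplus> y) \<oplus> ng q \<oplus> y"
    using x y w pA qA by (simp add: jn_def p_def wq assoc)
  have "one = (ng (ng p \<oplus> y) \<oplus> ng p) \<oplus> y"
  proof -
    have "ng (ng p \<oplus> y) \<oplus> ng p = ng (ng (ng y) \<oplus> ng p) \<oplus> ng p" using y pA by (simp add: comm)
    also have "\<dots> = ng (ng (ng p) \<oplus> ng y) \<oplus> ng y" using luk[OF ngA[OF y] ngA[OF pA]] by simp
    finally show ?thesis using y pA by (metis assoc ngA plA nxx onel comm)
  qed
  moreover have "(ng (ng p \<oplus> y) \<oplus> ng p) \<oplus> y \<preceq> (ng (ng p \<oplus> y) \<oplus> ng q) \<oplus> y"
    using qp pA qA y by (intro pl_mono pl_mono2 ng_anti) auto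
  ultimately have "one \<preceq> ng (jn x y) \<oplus> w"
    using x y w pA qA by (simp add: jn_def p_def wq assoc)
  then have "ng (jn x y) \<oplus> w = one" using x y w by (intro lq_antisym) auto
  then show ?thesis by (simp add: lq_def)
qed

lemma mt_eq: "x \<in> A \<Longrightarrow> y \<in> A \<Longrightarrow> mt x y = (x \<oplus> ng y) \<odot> y"
  by (simp add: mv_inf_def jn_def mul_def)
lemma mt_ng: "x \<in> A \<Longrightarrow> y \<in> A \<Longrightarrow> mt x y = ng (jn (ng x) (ng y))" by (simp add: mv_inf_def)
lemma jn_ng: "x \<in> A \<Longrightarrow> y \<in> A \<Longrightarrow> jn x y = ng (mt (ng x) (ng y))" by (simp add: mv_inf_def)
lemma mt_comm: "x \<in> A \<Longrightarrow> y \<in> A \<Longrightarrow> mt x y = mt y x" by (simp add: mt_ng jn_comm)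
lemma mt_lb1: "x \<in> A \<Longrightarrow> y \<in> A \<Longrightarrow> mt x y \<preceq> x"
  by (metis mt_ng jn_ub1 ngA ng_anti nn jnA)
lemma mt_lb2: "x \<in> A \<Longrightarrow> y \<in> A \<Longrightarrow> mt x y \<preceq> y"
  by (metis mt_comm mt_lb1)
lemma mt_glb: "x \<in> A \<Longrightarrow> y \<in> A \<Longrightarrow> w \<in> A \<Longrightarrow> w \<preceq> x \<Longrightarrow> w \<preceq> y \<Longrightarrow> w \<preceq> mt x y"
  by (metis mt_ng jn_lub ngA ng_anti nn jnA)
lemma mt_lq_eq: "x \<in> A \<Longrightarrow> y \<in> A \<Longrightarrow> x \<preceq> y \<Longrightarrow> mt x y = x"
  by (metis lq_antisym lq_refl mtA mt_glb mt_lb1)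
lemma mt_eq2: "x \<in> A \<Longrightarrow> y \<in> A \<Longrightarrow> mt x y = x \<odot> (ng x \<oplus> y)"
proof -
  assume x: "x \<in> A" and y: "y \<in> A"
  have "mt x y = mt y x" using x y by (rule mt_comm)
  also have "\<dots> = (y \<oplus> ng x) \<odot> x" using mt_eq[OF y x] .
  also have "\<dots> = x \<odot> (ng x \<oplus> y)" using x y by (simp add: comm mul_comm)
  finally show ?thesis .
qed

lemma pl_mt_distr: "w \<in> A \<Longrightarrow> a \<in> A \<Longrightarrow> b \<in> A \<Longrightarrow> w \<oplus> mt a b = mt (w \<oplus> a) (w \<oplus> b)"
proof -
  assume w: "w \<in> A" and a: "a \<in> A" and b: "b \<in> A"
  let ?u = "mt (w \<oplus> a) (w \<oplus> b)"
  have uA: "?u \<in> A" using w a b by simp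
  have r: "\<And>v. v \<in> A \<Longrightarrow> ?u \<preceq> w \<oplus> v \<Longrightarrow> ?u \<odot> ng w \<preceq> v"
    using resid w uA by (metis ngA nn)
  have "?u \<odot> ng w \<preceq> a" using r[OF a] mt_lb1 w a b by simp
  moreover have "?u \<odot> ng w \<preceq> b" using r[OF b] mt_lb2 w a b by simp
  ultimately have "?u \<odot> ng w \<preceq> mt a b" using mt_glb w a b uA by simp
  then have 1: "?u \<preceq> w \<oplus> mt a b" using resid w a b uA by (metis ngA nn mtA)
  have 2: "w \<oplus> mt a b \<preceq> ?u" using w a b
    by (intro mt_glb pl_mono2 mt_lb1 mt_lb2) auto
  show ?thesis using 1 2 w a b by (intro lq_antisym) auto
qed

lemma mul_jn_lq: "x \<in> A \<Longrightarrow> y \<in> A \<Longrightarrow> w \<in> A \<Longrightarrow> x \<odot> jn y w \<preceq> jn (x \<odot> y) (x \<odot> w)"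
proof -
  assume x: "x \<in> A" and y: "y \<in> A" and w: "w \<in> A"
  have "\<And>v. v \<in> A \<Longrightarrow> v \<preceq> ng x \<oplus> (x \<odot> v)"
    using resid x by (metis lq_refl mul_comm mulA)
  then have h1: "y \<preceq> ng x \<oplus> (x \<odot> y)" and h2: "w \<preceq> ng x \<oplus> (x \<odot> w)" using y w by auto
  have "ng x \<oplus> (x \<odot> y) \<preceq> ng x \<oplus> jn (x \<odot> y) (x \<odot> w)"
    using x y w by (intro pl_mono2 jn_ub1) auto
  then have 1: "y \<preceq> ng x \<oplus> jn (x \<odot> y) (x \<odot> w)" using h1 x y w
    by (intro lq_trans[OF _ _ _ h1]) auto
  have "ng x \<oplus> (x \<odot> w) \<preceq> ng x \<oplus> jn (x \<odot> y) (x \<odot> w)"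
    using x y w by (intro pl_mono2 jn_ub2) auto
  then have 2: "w \<preceq> ng x \<oplus> jn (x \<odot> y) (x \<odot> w)" using h2 x y w
    by (intro lq_trans[OF _ _ _ h2]) auto
  from 1 2 have "y \<preceq> ng x \<oplus> jn (x \<odot> y) (x \<odot> w)" "w \<preceq> ng x \<oplus> jn (x \<odot> y) (x \<odot> w)" .
  then have "jn y w \<preceq> ng x \<oplus> jn (x \<odot> y) (x \<odot> w)" using x y w by (intro jn_lub) auto
  then show ?thesis using resid x y w by (metis mul_comm jnA mulA)
qed

lemma prelin0: "x \<in> A \<Longrightarrow> y \<in> A \<Longrightarrow> mt (x \<odot> ng y) (y \<odot> ng x) = z"
proof -
  assume x: "x \<in> A" and y: "y \<in> A"
  define p where "p = x \<odot> ng y"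
  define q where "q = y \<odot> ng x"
  define m where "m = mt x y"
  define t where "t = mt p q"
  have A: "p \<in> A" "q \<in> A" "m \<in> A" "t \<in> A" using x y by (auto simp: p_def q_def m_def t_def)
  have np: "ng p = ng x \<oplus> y" and nq: "ng q = ng y \<oplus> x" using x y by (simp_all add: p_def q_def mul_def)
  have px: "p \<preceq> x" and qy: "q \<preceq> y" using x y by (simp_all add: p_def q_def mul_lq)
  have jnp: "jn x p = p \<oplus> (x \<odot> ng p)" using x A by (simp add: jn_def mul_def comm)
  have pm: "p \<oplus> m = x"
  proof -
    have "m = x \<odot> ng p" using x y by (simp add: m_def mt_eq2 np)
    then have "p \<oplus> m = jn x p" using jnp by simp
    also have "\<dots> = x" using px x A by (simp add: jn_comm jn_lq_eq)
    finally show ?thesis .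
  qed
  have qm: "q \<oplus> m = y"
  proof -
    have "m = mt y x" using x y by (simp add: m_def mt_comm)
    then have "m = y \<odot> ng q" using x y by (simp add: mt_eq2 nq)
    then have "q \<oplus> m = jn y q" using x y A by (simp add: jn_def mul_def comm)
    also have "\<dots> = y" using qy y A by (simp add: jn_comm jn_lq_eq)
    finally show ?thesis .
  qed
  have tm: "t \<oplus> m = m"
  proof -
    have "m \<oplus> t = mt (m \<oplus> p) (m \<oplus> q)" using A by (simp add: t_def pl_mt_distr)
    also have "\<dots> = m" using pm qm A by (simp add: comm m_def)
    finally show ?thesis using A by (simp add: comm)
  qed
  have "t \<odot> x \<preceq> q \<odot> x" using A x by (intro mul_mono) (auto simp: t_def mt_lb2)
  moreover have "q \<odot> x = z" using x y by (simp add: q_def mul_assoc[symmetric] mul_comm[of "ng x" x])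
  ultimately have "t \<odot> x = z" using A x by (metis lq_antisym z_lq mulA zA)
  then have tx: "t \<preceq> ng x" using A x by (simp add: lq_mul)
  have "ng x \<preceq> ng m" using x y by (simp add: m_def ng_anti mt_lb1)
  then have tnm: "t \<preceq> ng m" using tx A x by (meson lq_trans ngA)
  have "(t \<oplus> m) \<odot> ng m = mt t (ng m)" using A by (simp add: mt_eq)
  also have "\<dots> = t" using tnm A by (simp add: mt_lq_eq)
  finally have "t = m \<odot> ng m" using tm by simp
  then show ?thesis using A by (simp add: t_def p_def q_def)
qed

lemma prelin: "x \<in> A \<Longrightarrow> y \<in> A \<Longrightarrow> jn (imp x y) (imp y x) = one"
proof -
  assume x: "x \<in> A" and y: "y \<in> A"
  have "jn (imp x y) (imp y x) = ng (mt (ng (imp x y)) (ng (imp y x)))" using x y by (simp add: jn_ng)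
  also have "ng (imp x y) = x \<odot> ng y" using x y by (simp add: imp_def mul_def)
  also have "ng (imp y x) = y \<odot> ng x" using x y by (simp add: imp_def mul_def)
  finally show ?thesis using prelin0 x y by simp
qed

end


context mvl begin

abbreviation filt where "filt F \<equiv> mv_filter A (\<oplus>) ng z F"
abbreviation maxF where "maxF \<equiv> max_filters A (\<oplus>) ng z"

lemma filt_sub: "filt F \<Longrightarrow> F \<subseteq> A" by (simp add: mv_filter_def)
lemma filt_one: "filt F \<Longrightarrow> one \<in> F" by (simp add: mv_filter_def)
lemma filt_mul: "filt F \<Longrightarrow> x \<in> F \<Longrightarrow> y \<in> F \<Longrightarrow> x \<odot> y \<in> F" by (simp add: mv_filter_def)
lemma filt_up: "filt F \<Longrightarrow> x \<in> F \<Longrightarrow> y \<in> A \<Longrightarrow> x \<preceq> y \<Longrightarrow> y \<in> F" by (simp add: mv_filter_def)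
lemma filt_z: "filt F \<Longrightarrow> z \<in> F \<Longrightarrow> F = A"
  using filt_sub filt_up z_lq by blast
lemma filt_mt: "filt F \<Longrightarrow> x \<in> F \<Longrightarrow> y \<in> F \<Longrightarrow> mt x y \<in> F"
proof -
  assume f: "filt F" and x: "x \<in> F" and y: "y \<in> F"
  have xA: "x \<in> A" and yA: "y \<in> A" using f x y filt_sub by auto
  have "x \<odot> y \<preceq> mt x y" using xA yA by (intro mt_glb mul_lq mul_lq2) auto
  then show ?thesis using filt_up[OF f filt_mul[OF f x y]] xA yA by simp
qed
lemma filt_mt_iff: "filt F \<Longrightarrow> x \<in> A \<Longrightarrow> y \<in> A \<Longrightarrow> mt x y \<in> F \<longleftrightarrow> x \<in> F \<and> y \<in> F"
  using filt_mt filt_up mt_lb1 mt_lb2 mtA by metis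

lemma maxF_filt: "F \<in> maxF \<Longrightarrow> filt F" by (simp add: max_filters_def)
lemma maxF_ne: "F \<in> maxF \<Longrightarrow> F \<noteq> A" by (simp add: max_filters_def)
lemma maxF_max: "F \<in> maxF \<Longrightarrow> filt F' \<Longrightarrow> F' \<noteq> A \<Longrightarrow> F \<subseteq> F' \<Longrightarrow> F' = F"
  by (simp add: max_filters_def)
lemma maxF_z: "F \<in> maxF \<Longrightarrow> z \<notin> F" using maxF_filt maxF_ne filt_z by blast
lemma maxF_sub: "F \<in> maxF \<Longrightarrow> F \<subseteq> A" using maxF_filt filt_sub by blast

primrec pw :: "'a \<Rightarrow> nat \<Rightarrow> 'a" where
  "pw x 0 = one" | "pw x (Suc n) = x \<odot> pw x n"

lemma pwA[simp]: "x \<in> A \<Longrightarrow> pw x n \<in> A" by (induction n) auto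
lemma pw_add: "x \<in> A \<Longrightarrow> pw x (n + m) = pw x n \<odot> pw x m"
  by (induction n) (auto simp: mul_assoc)

lemma mul_swap: "a \<in> A \<Longrightarrow> b \<in> A \<Longrightarrow> c \<in> A \<Longrightarrow> d \<in> A \<Longrightarrow> (a \<odot> b) \<odot> (c \<odot> d) = (a \<odot> c) \<odot> (b \<odot> d)"
  by (metis mul_assoc mul_comm mulA)

definition gen1 where "gen1 F a = {w \<in> A. \<exists>f\<in>F. \<exists>n. f \<odot> pw a n \<preceq> w}"

lemma gen1_filt: "filt F \<Longrightarrow> a \<in> A \<Longrightarrow> filt (gen1 F a)"
proof -
  assume f: "filt F" and a: "a \<in> A"
  have FA: "F \<subseteq> A" using f filt_sub by blast
  show ?thesis unfolding mv_filter_def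
  proof (intro conjI ballI impI)
    show "gen1 F a \<subseteq> A" by (auto simp: gen1_def)
    show "one \<in> gen1 F a" unfolding gen1_def using filt_one[OF f] a FA
      by (auto intro!: bexI[of _ one] exI[of _ 0])
  next
    fix x y assume x: "x \<in> gen1 F a" and y: "y \<in> gen1 F a"
    then obtain f n g m where fF: "f \<in> F" and gF: "g \<in> F" and fx: "f \<odot> pw a n \<preceq> x" and gy: "g \<odot> pw a m \<preceq> y"
      and xA: "x \<in> A" and yA: "y \<in> A" unfolding gen1_def by blast
    have fA: "f \<in> A" "g \<in> A" using fF gF FA by auto
    have e: "(f \<odot> g) \<odot> pw a (n + m) = (f \<odot> pw a n) \<odot> (g \<odot> pw a m)"
      using fA a by (simp add: pw_add mul_swap)
    have l1: "(f \<odot> pw a n) \<odot> (g \<odot> pw a m) \<preceq> x \<odot> (g \<odot> pw a m)"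
      using fx fA a xA by (intro mul_mono) auto
    have l2: "x \<odot> (g \<odot> pw a m) \<preceq> x \<odot> y"
      using gy fA a xA yA by (intro mul_mono2) auto
    have "(f \<odot> g) \<odot> pw a (n + m) \<preceq> x \<odot> y" using lq_trans[OF _ _ _ l1 l2] e fA a xA yA by simp
    then show "x \<odot> y \<in> gen1 F a" unfolding gen1_def using filt_mul[OF f fF gF] xA yA by auto
  next
    fix x y assume x: "x \<in> gen1 F a" and y: "y \<in> A" and xy: "x \<preceq> y"
    then obtain f n where "f \<in> F" "f \<odot> pw a n \<preceq> x" "x \<in> A" unfolding gen1_def by blast
    then show "y \<in> gen1 F a" unfolding gen1_def using y xy FA a
      by (blast intro: lq_trans mulA pwA)
  qed
qed

lemma gen1_sup: "filt F \<Longrightarrow> a \<in> A \<Longrightarrow> F \<subseteq> gen1 F a"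
proof
  fix w assume f: "filt F" and a: "a \<in> A" and w: "w \<in> F"
  have wA: "w \<in> A" using f w filt_sub by blast
  have "w \<odot> pw a 0 \<preceq> w" using wA by simp
  then show "w \<in> gen1 F a" unfolding gen1_def using wA w by blast
qed
lemma gen1_a: "filt F \<Longrightarrow> a \<in> A \<Longrightarrow> a \<in> gen1 F a"
  unfolding gen1_def using filt_one by (fastforce intro!: bexI[of _ one] exI[of _ 1])

lemma maxF_pw: "F \<in> maxF \<Longrightarrow> a \<in> A \<Longrightarrow> a \<notin> F \<Longrightarrow> \<exists>n. ng (pw a n) \<in> F"
proof -
  assume M: "F \<in> maxF" and a: "a \<in> A" and na: "a \<notin> F"
  have f: "filt F" using M maxF_filt by blast
  have "gen1 F a = A"
  proof (rule ccontr)
    assume "gen1 F a \<noteq> A"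
    then have "gen1 F a = F" using maxF_max[OF M gen1_filt[OF f a]] gen1_sup[OF f a] by blast
    then show False using gen1_a[OF f a] na by simp
  qed
  then have "z \<in> gen1 F a" by simp
  then obtain f' n where fF: "f' \<in> F" and le: "f' \<odot> pw a n \<preceq> z" unfolding gen1_def by blast
  have fA: "f' \<in> A" using fF f filt_sub by blast
  have "f' \<preceq> ng (pw a n)" using resid[of f' "pw a n" z] le fA a by simp
  then have "ng (pw a n) \<in> F" using filt_up[OF f fF] fA a by simp
  then show ?thesis by blast
qed

lemma jn_pw1: "a \<in> A \<Longrightarrow> b \<in> A \<Longrightarrow> jn a b = one \<Longrightarrow> jn (pw a n) b = one"
proof (induction n)
  case 0 then show ?case by (simp add: jn_def)
next
  case (Suc n)
  have IH: "jn (pw a n) b = one" using Suc by simp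
  have e: "a = a \<odot> jn (pw a n) b" using IH Suc.prems by simp
  have l1: "a \<odot> jn (pw a n) b \<preceq> jn (a \<odot> pw a n) (a \<odot> b)" using Suc.prems by (intro mul_jn_lq) auto
  have l2a: "a \<odot> b \<preceq> b" using Suc.prems by (simp add: mul_lq2)
  have l2b: "b \<preceq> jn (pw a (Suc n)) b" using Suc.prems by (intro jn_ub2) auto
  have l2c: "a \<odot> b \<preceq> jn (pw a (Suc n)) b" using lq_trans[OF _ _ _ l2a l2b] Suc.prems by simp
  have l2d: "pw a (Suc n) \<preceq> jn (pw a (Suc n)) b" using Suc.prems by (intro jn_ub1) auto
  have l2: "jn (a \<odot> pw a n) (a \<odot> b) \<preceq> jn (pw a (Suc n)) b" using Suc.prems l2c l2d
    by (intro jn_lub) auto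
  have ab: "a \<preceq> jn (pw a (Suc n)) b" using lq_trans[OF _ _ _ l1 l2] e Suc.prems by simp
  have "one \<preceq> jn (pw a (Suc n)) b"
    using Suc.prems ab by (metis jn_lub jn_ub2 jnA pwA)
  then show ?case using Suc.prems by (intro lq_antisym) auto
qed

lemma jn_pw: "a \<in> A \<Longrightarrow> b \<in> A \<Longrightarrow> jn a b = one \<Longrightarrow> jn (pw a n) (pw b m) = one"
proof -
  assume a: "a \<in> A" and b: "b \<in> A" and j: "jn a b = one"
  have "jn (pw a n) b = one" using jn_pw1[OF a b j] .
  then have "jn b (pw a n) = one" using a b by (simp add: jn_comm)
  then have "jn (pw b m) (pw a n) = one" using jn_pw1 a b by simp
  then show ?thesis using a b by (simp add: jn_comm)
qed

lemma maxF_chain: "F \<in> maxF \<Longrightarrow> x \<in> A \<Longrightarrow> y \<in> A \<Longrightarrow> imp x y \<in> F \<or> imp y x \<in> F"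
proof (rule ccontr)
  assume M: "F \<in> maxF" and x: "x \<in> A" and y: "y \<in> A" and n: "\<not> (imp x y \<in> F \<or> imp y x \<in> F)"
  have f: "filt F" using M maxF_filt by blast
  obtain k where k: "ng (pw (imp x y) k) \<in> F" using maxF_pw[OF M] x y n by (meson impA)
  obtain l where l: "ng (pw (imp y x) l) \<in> F" using maxF_pw[OF M] x y n by (meson impA)
  let ?p = "pw (imp x y) k" and ?q = "pw (imp y x) l"
  have pq: "?p \<in> A" "?q \<in> A" using x y by auto
  have "jn ?p ?q = one" using jn_pw prelin x y by simp
  then have "mt (ng ?p) (ng ?q) = z" using pq by (simp add: mt_ng)
  moreover have "ng ?p \<odot> ng ?q \<preceq> mt (ng ?p) (ng ?q)" using pq by (intro mt_glb mul_lq mul_lq2) auto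
  ultimately have "z \<in> F" using filt_up[OF f filt_mul[OF f k l]] pq by (metis zA)
  then show False using M maxF_z by blast
qed

definition genS where "genS E = {w \<in> A. \<exists>es. set es \<subseteq> E \<and> foldr (\<odot>) es one \<preceq> w}"

lemma prodA: "set es \<subseteq> A \<Longrightarrow> foldr (\<odot>) es one \<in> A" by (induction es) auto
lemma prod_app: "set es \<subseteq> A \<Longrightarrow> set fs \<subseteq> A \<Longrightarrow> foldr (\<odot>) (es @ fs) one = foldr (\<odot>) es one \<odot> foldr (\<odot>) fs one"
  by (induction es) (auto simp: mul_assoc prodA)
lemma prod_in: "filt F \<Longrightarrow> set es \<subseteq> F \<Longrightarrow> foldr (\<odot>) es one \<in> F"
  by (induction es) (auto simp: filt_one filt_mul)

lemma genS_filt: "E \<subseteq> A \<Longrightarrow> filt (genS E)"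
  unfolding mv_filter_def
proof (intro conjI ballI impI)
  assume E: "E \<subseteq> A"
  show "genS E \<subseteq> A" by (auto simp: genS_def)
  show "one \<in> genS E" unfolding genS_def by (auto intro!: exI[of _ "[]"])
  fix x y assume x: "x \<in> genS E" and y: "y \<in> genS E"
  then obtain es fs where es: "set es \<subseteq> E" "foldr (\<odot>) es one \<preceq> x" and fs: "set fs \<subseteq> E" "foldr (\<odot>) fs one \<preceq> y"
    and xA: "x \<in> A" and yA: "y \<in> A" unfolding genS_def by blast
  have pA: "foldr (\<odot>) es one \<in> A" "foldr (\<odot>) fs one \<in> A" using es fs E prodA by auto
  have l1: "foldr (\<odot>) es one \<odot> foldr (\<odot>) fs one \<preceq> x \<odot> foldr (\<odot>) fs one"
    using es pA xA by (intro mul_mono) auto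
  have l2: "x \<odot> foldr (\<odot>) fs one \<preceq> x \<odot> y" using fs pA xA yA by (intro mul_mono2) auto
  have l3: "foldr (\<odot>) es one \<odot> foldr (\<odot>) fs one \<preceq> x \<odot> y" using lq_trans[OF _ _ _ l1 l2] pA xA yA by simp
  have "foldr (\<odot>) (es @ fs) one = foldr (\<odot>) es one \<odot> foldr (\<odot>) fs one"
    using es fs E by (intro prod_app) auto
  then have "foldr (\<odot>) (es @ fs) one \<preceq> x \<odot> y" using l3 by simp
  then show "x \<odot> y \<in> genS E" unfolding genS_def using es fs xA yA by (auto intro!: exI[of _ "es @ fs"])
next
  fix x y assume x: "x \<in> genS E" and y: "y \<in> A" and xy: "x \<preceq> y" and E: "E \<subseteq> A"
  then show "y \<in> genS E" unfolding genS_def by (blast intro: lq_trans prodA)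
qed

lemma genS_sup: "E \<subseteq> A \<Longrightarrow> E \<subseteq> genS E"
  unfolding genS_def by (auto intro!: exI[of _ "[_]"])

lemma zorn_max: "filt F0 \<Longrightarrow> F0 \<noteq> A \<Longrightarrow> \<exists>M\<in>maxF. F0 \<subseteq> M"
proof -
  assume f0: "filt F0" and p0: "F0 \<noteq> A"
  let ?P = "{F. filt F \<and> F \<noteq> A \<and> F0 \<subseteq> F}"
  have "\<forall>C\<in>chains ?P. \<exists>U\<in>?P. \<forall>X\<in>C. X \<subseteq> U"
  proof
    fix C assume C: "C \<in> chains ?P"
    show "\<exists>U\<in>?P. \<forall>X\<in>C. X \<subseteq> U"
    proof (cases "C = {}")
      case True then show ?thesis using f0 p0 by auto
    next
      case False
      have CP: "C \<subseteq> ?P" using C chainsD2 by blast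
      have ch: "\<And>X Y. X \<in> C \<Longrightarrow> Y \<in> C \<Longrightarrow> X \<subseteq> Y \<or> Y \<subseteq> X" using C chainsD by blast
      have zn: "z \<notin> \<Union>C" using CP filt_z by blast
      have "filt (\<Union>C)" unfolding mv_filter_def
      proof (intro conjI ballI impI)
        show "\<Union>C \<subseteq> A" using CP filt_sub by blast
        show "one \<in> \<Union>C" using False CP filt_one by blast
        fix x y assume "x \<in> \<Union>C" "y \<in> \<Union>C"
        then obtain X Y where "X \<in> C" "Y \<in> C" "x \<in> X" "y \<in> Y" by blast
        then show "x \<odot> y \<in> \<Union>C" using ch CP filt_mul by (metis (no_types, lifting) UnionI mem_Collect_eq subset_iff)
      next
        fix x y assume "x \<in> \<Union>C" "y \<in> A" "x \<preceq> y"
        then show "y \<in> \<Union>C" using CP filt_up by blast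
      qed
      moreover have "\<Union>C \<noteq> A" using zn by auto
      moreover have "F0 \<subseteq> \<Union>C" using False CP by blast
      ultimately have "\<Union>C \<in> ?P" by blast
      then show ?thesis by (intro bexI[of _ "\<Union>C"]) auto
    qed
  qed
  from Zorn_Lemma2[OF this] obtain M where M: "M \<in> ?P" and mx: "\<forall>X\<in>?P. M \<subseteq> X \<longrightarrow> X = M" by blast
  have "M \<in> maxF" unfolding max_filters_def using M mx by auto
  then show ?thesis using M by blast
qed

lemma compact: "E \<subseteq> A \<Longrightarrow> \<forall>F\<in>maxF. \<exists>e\<in>E. e \<notin> F \<Longrightarrow> \<exists>es. set es \<subseteq> E \<and> (\<forall>F\<in>maxF. \<exists>e\<in>set es. e \<notin> F)"
proof -
  assume E: "E \<subseteq> A" and cov: "\<forall>F\<in>maxF. \<exists>e\<in>E. e \<notin> F"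
  have "genS E = A"
  proof (rule ccontr)
    assume "genS E \<noteq> A"
    then obtain M where "M \<in> maxF" "genS E \<subseteq> M" using zorn_max genS_filt E by blast
    then show False using cov genS_sup[OF E] by blast
  qed
  then obtain es where es: "set es \<subseteq> E" "foldr (\<odot>) es one \<preceq> z" unfolding genS_def using zA by blast
  have "\<forall>F\<in>maxF. \<exists>e\<in>set es. e \<notin> F"
  proof
    fix F assume F: "F \<in> maxF"
    show "\<exists>e\<in>set es. e \<notin> F"
    proof (rule ccontr)
      assume "\<not> ?thesis"
      then have "set es \<subseteq> F" by blast
      then have "foldr (\<odot>) es one \<in> F" using prod_in maxF_filt F by blast
      then have "z \<in> F" using filt_up[OF maxF_filt[OF F] _ zA es(2)] by blast
      then show False using F maxF_z by blast
    qed
  qed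
  then show ?thesis using es by blast
qed

end


context mvl begin

lemma mul_pl_lq: "a \<in> A \<Longrightarrow> b \<in> A \<Longrightarrow> w \<in> A \<Longrightarrow> a \<odot> (b \<oplus> w) \<preceq> (a \<odot> b) \<oplus> w"
proof -
  assume a: "a \<in> A" and b: "b \<in> A" and w: "w \<in> A"
  have "b \<preceq> ng a \<oplus> (a \<odot> b)" using resid[of b a "a \<odot> b"] a b by (simp add: mul_comm)
  then have "b \<oplus> w \<preceq> ng a \<oplus> (a \<odot> b) \<oplus> w" using a b w by (intro pl_mono) auto
  then have "b \<oplus> w \<preceq> ng a \<oplus> ((a \<odot> b) \<oplus> w)" using a b w by (simp add: assoc)
  then have "(b \<oplus> w) \<odot> a \<preceq> (a \<odot> b) \<oplus> w" using resid[of "b \<oplus> w" a "(a \<odot> b) \<oplus> w"] a b w by simp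
  then show ?thesis using a b w by (simp add: mul_comm)
qed

lemma imp_trans: "x \<in> A \<Longrightarrow> y \<in> A \<Longrightarrow> w \<in> A \<Longrightarrow> imp x y \<odot> imp y w \<preceq> imp x w"
proof -
  assume x: "x \<in> A" and y: "y \<in> A" and w: "w \<in> A"
  have 1: "imp x y \<odot> (ng y \<oplus> w) \<preceq> (imp x y \<odot> ng y) \<oplus> w" using x y w by (intro mul_pl_lq) auto
  have "imp x y \<odot> ng y = mt (ng x) (ng y)" using x y by (simp add: imp_def mt_eq)
  then have "imp x y \<odot> ng y \<preceq> ng x" using x y by (simp add: mt_lb1)
  then have 2: "(imp x y \<odot> ng y) \<oplus> w \<preceq> ng x \<oplus> w" using x y w by (intro pl_mono) auto
  show ?thesis using lq_trans[OF _ _ _ 1 2] x y w by (simp add: imp_def)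
qed

lemma imp_pl: "x \<in> A \<Longrightarrow> y \<in> A \<Longrightarrow> w \<in> A \<Longrightarrow> imp x y \<preceq> imp (x \<oplus> w) (y \<oplus> w)"
proof -
  assume x: "x \<in> A" and y: "y \<in> A" and w: "w \<in> A"
  have 1: "imp x y \<odot> (x \<oplus> w) \<preceq> (imp x y \<odot> x) \<oplus> w" using x y w by (intro mul_pl_lq) auto
  have "imp x y \<odot> x = mt y x" using x y by (simp add: imp_def mt_eq comm)
  then have "imp x y \<odot> x \<preceq> y" using x y by (simp add: mt_lb1)
  then have 2: "(imp x y \<odot> x) \<oplus> w \<preceq> y \<oplus> w" using x y w by (intro pl_mono) auto
  have "imp x y \<odot> (x \<oplus> w) \<preceq> y \<oplus> w" using lq_trans[OF _ _ _ 1 2] x y w by simp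
  then show ?thesis using resid[of "imp x y" "x \<oplus> w" "y \<oplus> w"] x y w by (simp add: imp_def ng_pl)
qed

lemma imp_ng: "x \<in> A \<Longrightarrow> y \<in> A \<Longrightarrow> imp (ng y) (ng x) = imp x y" by (simp add: imp_def comm)
lemma imp_self: "x \<in> A \<Longrightarrow> imp x x = one" by (simp add: imp_def)
lemma imp_one_iff: "x \<in> A \<Longrightarrow> y \<in> A \<Longrightarrow> imp x y = one \<longleftrightarrow> x \<preceq> y" by (simp add: imp_def lq_def)
lemma lq_imp: "x \<in> A \<Longrightarrow> y \<in> A \<Longrightarrow> y \<preceq> imp x y" by (simp add: imp_def lq_pl2)

end

locale pav = mvl +
  fixes c :: "rat \<Rightarrow> 'a"
  assumes pav: "pavelka_algebra A (\<oplus>) ng c" and zc: "z = c 0"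
begin

lemma cA[simp]: "0 \<le> r \<Longrightarrow> r \<le> 1 \<Longrightarrow> c r \<in> A" using pav by (simp add: pavelka_algebra_def)
lemma c_pl: "0 \<le> r \<Longrightarrow> r \<le> 1 \<Longrightarrow> 0 \<le> s \<Longrightarrow> s \<le> 1 \<Longrightarrow> c r \<oplus> c s = c (min (r + s) 1)"
  using pav by (simp add: pavelka_algebra_def)
lemma c_ng: "0 \<le> r \<Longrightarrow> r \<le> 1 \<Longrightarrow> ng (c r) = c (1 - r)" using pav by (simp add: pavelka_algebra_def)
lemma c0: "c 0 = z" using zc by simp
lemma c1: "c 1 = one" using c_ng[of 0] by (simp add: zc)
lemma c_mul: "0 \<le> r \<Longrightarrow> r \<le> 1 \<Longrightarrow> 0 \<le> s \<Longrightarrow> s \<le> 1 \<Longrightarrow> c r \<odot> c s = c (max 0 (r + s - 1))"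
proof -
  assume a: "0 \<le> r" "r \<le> 1" "0 \<le> s" "s \<le> 1"
  have "c r \<odot> c s = ng (c (1 - r) \<oplus> c (1 - s))" using a by (simp add: mul_def c_ng)
  also have "\<dots> = ng (c (min (1 - r + (1 - s)) 1))" using a by (simp add: c_pl)
  also have "\<dots> = c (1 - min (1 - r + (1 - s)) 1)" using a by (simp add: c_ng)
  also have "1 - min (1 - r + (1 - s)) 1 = max 0 (r + s - 1)" by (simp add: min_def max_def)
  finally show ?thesis .
qed
lemma c_imp: "0 \<le> r \<Longrightarrow> r \<le> 1 \<Longrightarrow> 0 \<le> s \<Longrightarrow> s \<le> 1 \<Longrightarrow> imp (c r) (c s) = c (min (1 - r + s) 1)"
  by (simp add: imp_def c_ng c_pl)

lemma pw_c: "0 \<le> u \<Longrightarrow> u \<le> 1 \<Longrightarrow> pw (c u) n = c (max 0 (1 - of_nat n * (1 - u)))"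
proof (induction n)
  case 0 then show ?case by (simp add: c1)
next
  case (Suc n)
  have "pw (c u) (Suc n) = c u \<odot> c (max 0 (1 - of_nat n * (1 - u)))" using Suc by simp
  also have "\<dots> = c (max 0 (u + max 0 (1 - of_nat n * (1 - u)) - 1))"
    using Suc.prems by (intro c_mul) (auto simp: max_def mult_nonneg_nonneg)
  also have "max 0 (u + max 0 (1 - of_nat n * (1 - u)) - 1) = max 0 (1 - of_nat (Suc n) * (1 - u))"
    using Suc.prems by (auto simp: max_def algebra_simps)
  finally show ?case .
qed

lemma filt_c: "filt F \<Longrightarrow> F \<noteq> A \<Longrightarrow> 0 \<le> u \<Longrightarrow> u < 1 \<Longrightarrow> c u \<notin> F"
proof
  assume f: "filt F" and p: "F \<noteq> A" and u: "0 \<le> u" "u < 1" and cu: "c u \<in> F"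
  obtain n where n: "1 / (1 - u) < of_nat n" using reals_Archimedean2 by blast
  then have "1 < of_nat n * (1 - u)" using u by (simp add: field_simps)
  then have "max 0 (1 - of_nat n * (1 - u)) = 0" by simp
  then have "pw (c u) n = c 0" using pw_c[of u n] u by simp
  moreover have "pw (c u) n \<in> F" using cu f by (induction n) (auto simp: filt_one filt_mul)
  ultimately show False using filt_z[OF f] p by (simp add: c0)
qed

definition fle where "fle F x y \<longleftrightarrow> imp x y \<in> F"

lemma fle_refl: "filt F \<Longrightarrow> x \<in> A \<Longrightarrow> fle F x x" by (simp add: fle_def imp_self filt_one)
lemma fle_trans: "filt F \<Longrightarrow> x \<in> A \<Longrightarrow> y \<in> A \<Longrightarrow> w \<in> A \<Longrightarrow> fle F x y \<Longrightarrow> fle F y w \<Longrightarrow> fle F x w"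
  unfolding fle_def by (meson filt_mul filt_up imp_trans impA)
lemma fle_lq: "filt F \<Longrightarrow> x \<in> A \<Longrightarrow> y \<in> A \<Longrightarrow> x \<preceq> y \<Longrightarrow> fle F x y"
  using imp_one_iff[of x y] filt_one[of F] by (simp add: fle_def)
lemma fle_pl: "filt F \<Longrightarrow> x \<in> A \<Longrightarrow> y \<in> A \<Longrightarrow> w \<in> A \<Longrightarrow> fle F x y \<Longrightarrow> fle F (x \<oplus> w) (y \<oplus> w)"
  unfolding fle_def by (meson filt_up imp_pl impA plA)
lemma fle_pl2: "filt F \<Longrightarrow> x \<in> A \<Longrightarrow> y \<in> A \<Longrightarrow> w \<in> A \<Longrightarrow> fle F x y \<Longrightarrow> fle F (w \<oplus> x) (w \<oplus> y)"
  using fle_pl comm by metis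
lemma fle_ng: "x \<in> A \<Longrightarrow> y \<in> A \<Longrightarrow> fle F (ng y) (ng x) \<longleftrightarrow> fle F x y"
  by (simp add: fle_def imp_ng)
lemma fle_total: "F \<in> maxF \<Longrightarrow> x \<in> A \<Longrightarrow> y \<in> A \<Longrightarrow> fle F x y \<or> fle F y x"
  by (simp add: fle_def maxF_chain)
lemma fle_in: "filt F \<Longrightarrow> x \<in> A \<Longrightarrow> y \<in> A \<Longrightarrow> x \<in> F \<Longrightarrow> fle F y x"
  unfolding fle_def using filt_up lq_imp impA by blast

lemma fle_c: "filt F \<Longrightarrow> F \<noteq> A \<Longrightarrow> 0 \<le> r \<Longrightarrow> r \<le> 1 \<Longrightarrow> 0 \<le> s \<Longrightarrow> s \<le> 1 \<Longrightarrow> fle F (c r) (c s) \<longleftrightarrow> r \<le> s"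
proof -
  assume f: "filt F" and p: "F \<noteq> A" and a: "0 \<le> r" "r \<le> 1" "0 \<le> s" "s \<le> 1"
  have e: "imp (c r) (c s) = c (min (1 - r + s) 1)" using a by (simp add: c_imp)
  show ?thesis
  proof
    assume "fle F (c r) (c s)"
    then have "c (min (1 - r + s) 1) \<in> F" using e by (simp add: fle_def)
    then have "\<not> min (1 - r + s) 1 < 1" using filt_c[OF f p, of "min (1 - r + s) 1"] a by auto
    then show "r \<le> s" by simp
  next
    assume "r \<le> s"
    then have "min (1 - r + s) 1 = 1" by simp
    then show "fle F (c r) (c s)" using e f by (simp add: fle_def c1 filt_one)
  qed
qed

end


context pav begin

definition chr :: "'a set \<Rightarrow> 'a \<Rightarrow> real \<Rightarrow> bool" where "chr F x t \<longleftrightarrow> 0 \<le> t \<and> t \<le> 1 \<and>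
   (\<forall>q. 0 \<le> q \<longrightarrow> q \<le> 1 \<longrightarrow> of_rat q < t \<longrightarrow> fle F (c q) x) \<and>
   (\<forall>q. 0 \<le> q \<longrightarrow> q \<le> 1 \<longrightarrow> t < of_rat q \<longrightarrow> fle F x (c q))"

lemma rat_bounds: "0 \<le> (a::real) \<Longrightarrow> a < of_rat q \<Longrightarrow> 0 \<le> q" "of_rat q < (b::real) \<Longrightarrow> b \<le> 1 \<Longrightarrow> q \<le> 1"
proof -
  show "0 \<le> a \<Longrightarrow> a < of_rat q \<Longrightarrow> 0 \<le> q"
    by (metis less_le_trans linorder_not_le of_rat_less_0_iff order_less_imp_le)
  show "of_rat q < b \<Longrightarrow> b \<le> 1 \<Longrightarrow> q \<le> 1"
    by (metis less_le_trans linorder_not_le of_rat_less_1_iff order_less_imp_le)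
qed

lemma maxF_filt_ne: "F \<in> maxF \<Longrightarrow> filt F \<and> F \<noteq> A" using maxF_filt maxF_ne by blast

lemma chr_unique: "F \<in> maxF \<Longrightarrow> x \<in> A \<Longrightarrow> chr F x t1 \<Longrightarrow> chr F x t2 \<Longrightarrow> t1 = t2"
proof (rule ccontr)
  assume M: "F \<in> maxF" and x: "x \<in> A" and c1: "chr F x t1" and c2: "chr F x t2" and ne: "t1 \<noteq> t2"
  have key: "\<And>a b. chr F x a \<Longrightarrow> chr F x b \<Longrightarrow> a < b \<Longrightarrow> False"
  proof -
    fix a b assume ca: "chr F x a" and cb: "chr F x b" and ab: "a < b"
    obtain q1 where q1: "a < of_rat q1" "of_rat q1 < b" using of_rat_dense[OF ab] by blast
    obtain q2 where q2: "of_rat q1 < (of_rat q2 :: real)" "of_rat q2 < b" using of_rat_dense[OF q1(2)] by blast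
    have a0: "0 \<le> a" "b \<le> 1" using ca cb by (auto simp: chr_def)
    have r: "0 \<le> q1" "q1 \<le> 1" "0 \<le> q2" "q2 \<le> 1"
      using rat_bounds a0 q1 q2 by (meson less_trans)+
    have f1: "fle F x (c q1)" using ca q1 r by (auto simp: chr_def)
    have f2: "fle F (c q2) x" using cb q2 r by (auto simp: chr_def)
    have "fle F (c q2) (c q1)" using fle_trans[OF _ _ _ _ f2 f1] M maxF_filt x r by simp
    then have "q2 \<le> q1" using fle_c M r maxF_filt_ne by blast
    then show False using q2 by (simp add: of_rat_less)
  qed
  show False using ne key[OF c1 c2] key[OF c2 c1] by linarith
qed

definition hF :: "'a set \<Rightarrow> 'a \<Rightarrow> real" where "hF F x = Sup {of_rat q | q. 0 \<le> q \<and> q \<le> 1 \<and> fle F (c q) x}"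

lemma chr_hF: "F \<in> maxF \<Longrightarrow> x \<in> A \<Longrightarrow> chr F x (hF F x)"
proof -
  assume M: "F \<in> maxF" and x: "x \<in> A"
  have f: "filt F" "F \<noteq> A" using M maxF_filt_ne by auto
  let ?L = "{of_rat q | q. 0 \<le> q \<and> q \<le> 1 \<and> fle F (c q) x} :: real set"
  have z0: "fle F (c 0) x" using fle_lq[OF f(1)] x by (simp add: c0)
  then have L0: "0 \<in> ?L" by force
  have bdd: "\<And>l. l \<in> ?L \<Longrightarrow> l \<le> 1" by auto
  have ne: "?L \<noteq> {}" using L0 by blast
  have bdda: "bdd_above ?L" by (rule bdd_aboveI) (rule bdd)
  have t0: "0 \<le> hF F x" unfolding hF_def using cSup_upper[OF L0 bdda] .
  have t1: "hF F x \<le> 1" unfolding hF_def using cSup_least[OF ne] bdd by blast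
  have A1: "fle F (c q) x" if q: "0 \<le> q" "q \<le> 1" "of_rat q < hF F x" for q
  proof -
    obtain l where l: "l \<in> ?L" "of_rat q < l" using less_cSupD[OF ne] q unfolding hF_def by blast
    then obtain q' where q': "l = of_rat q'" "0 \<le> q'" "q' \<le> 1" "fle F (c q') x" by blast
    have "q \<le> q'" using l q' by (simp add: of_rat_less)
    then have "fle F (c q) (c q')" using fle_c f q q' by blast
    then show ?thesis using fle_trans[OF f(1) _ _ x _ q'(4)] q q' by simp
  qed
  have A2: "fle F x (c q)" if q: "0 \<le> q" "q \<le> 1" "hF F x < of_rat q" for q
  proof (rule ccontr)
    assume "\<not> fle F x (c q)"
    then have "fle F (c q) x" using fle_total[OF M x cA[OF q(1) q(2)]] by auto
    then have "of_rat q \<in> ?L" using q by blast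
    then have "of_rat q \<le> hF F x" unfolding hF_def by (rule cSup_upper[OF _ bdda])
    then show False using q by simp
  qed
  show ?thesis unfolding chr_def using t0 t1 A1 A2 by blast
qed

lemma chr_le: "F \<in> maxF \<Longrightarrow> x \<in> A \<Longrightarrow> chr F x t \<Longrightarrow> 0 \<le> q \<Longrightarrow> q \<le> 1 \<Longrightarrow> fle F (c q) x \<Longrightarrow> of_rat q \<le> t"
proof (rule ccontr)
  assume M: "F \<in> maxF" and x: "x \<in> A" and ch: "chr F x t" and q: "0 \<le> q" "q \<le> 1" and fq: "fle F (c q) x"
    and n: "\<not> of_rat q \<le> t"
  obtain q' where q': "t < of_rat q'" "of_rat q' < (of_rat q :: real)" using of_rat_dense[of t "of_rat q"] n by auto
  have t01: "0 \<le> t" "t \<le> 1" using ch by (auto simp: chr_def)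
  have r: "0 \<le> q'" "q' \<le> 1" using rat_bounds(1)[OF t01(1) q'(1)] q' q by (auto simp: of_rat_less)
  have "fle F x (c q')" using ch q' r by (auto simp: chr_def)
  then have "fle F (c q) (c q')" using fle_trans[OF _ _ x _ fq] M maxF_filt q r by simp
  then have "q \<le> q'" using fle_c M q r maxF_filt_ne by blast
  then show False using q' by (simp add: of_rat_less)
qed

lemma hF_eq: "F \<in> maxF \<Longrightarrow> x \<in> A \<Longrightarrow> chr F x t \<Longrightarrow> hF F x = t"
  using chr_hF chr_unique by blast

lemma hF_range: "F \<in> maxF \<Longrightarrow> x \<in> A \<Longrightarrow> 0 \<le> hF F x \<and> hF F x \<le> 1"
  using chr_hF by (simp add: chr_def)

lemma hF_c: "F \<in> maxF \<Longrightarrow> 0 \<le> r \<Longrightarrow> r \<le> 1 \<Longrightarrow> hF F (c r) = of_rat r"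
proof -
  assume M: "F \<in> maxF" and r: "0 \<le> r" "r \<le> 1"
  have f: "filt F" "F \<noteq> A" using M maxF_filt_ne by auto
  have "chr F (c r) (of_rat r)" unfolding chr_def using r fle_c[OF f] by (auto simp: of_rat_less)
  then show ?thesis using hF_eq M r by simp
qed

lemma hF_ng: "F \<in> maxF \<Longrightarrow> x \<in> A \<Longrightarrow> hF F (ng x) = 1 - hF F x"
proof -
  assume M: "F \<in> maxF" and x: "x \<in> A"
  have ch: "chr F x (hF F x)" using chr_hF M x by blast
  have "chr F (ng x) (1 - hF F x)" unfolding chr_def
  proof (intro conjI allI impI)
    show "0 \<le> 1 - hF F x" "1 - hF F x \<le> 1" using ch by (auto simp: chr_def)
  next
    fix q :: rat assume q: "0 \<le> q" "q \<le> 1" "of_rat q < 1 - hF F x"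
    then have "hF F x < of_rat (1 - q)" by (simp add: of_rat_diff)
    then have "fle F x (c (1 - q))" using ch q by (auto simp: chr_def)
    then have "fle F (ng (c (1 - q))) (ng x)" using fle_ng x q by simp
    then show "fle F (c q) (ng x)" using c_ng[of "1 - q"] q by simp
  next
    fix q :: rat assume q: "0 \<le> q" "q \<le> 1" "1 - hF F x < of_rat q"
    then have "of_rat (1 - q) < hF F x" by (simp add: of_rat_diff)
    then have "fle F (c (1 - q)) x" using ch q by (auto simp: chr_def)
    then have "fle F (ng x) (ng (c (1 - q)))" using fle_ng x q by simp
    then show "fle F (ng x) (c q)" using c_ng[of "1 - q"] q by simp
  qed
  then show ?thesis using hF_eq M x by simp
qed

lemma fle_c_pl: "filt F \<Longrightarrow> x \<in> A \<Longrightarrow> y \<in> A \<Longrightarrow> 0 \<le> q1 \<Longrightarrow> q1 \<le> 1 \<Longrightarrow> 0 \<le> q2 \<Longrightarrow> q2 \<le> 1 \<Longrightarrow>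
  fle F (c q1) x \<Longrightarrow> fle F (c q2) y \<Longrightarrow> fle F (c (min (q1 + q2) 1)) (x \<oplus> y)"
proof -
  assume f: "filt F" and xy: "x \<in> A" "y \<in> A" and q: "0 \<le> q1" "q1 \<le> 1" "0 \<le> q2" "q2 \<le> 1"
    and a: "fle F (c q1) x" and b: "fle F (c q2) y"
  have 1: "fle F (c q1 \<oplus> c q2) (x \<oplus> c q2)" using fle_pl[OF f _ _ _ a] xy q by simp
  have 2: "fle F (x \<oplus> c q2) (x \<oplus> y)" using fle_pl2[OF f _ _ _ b] xy q by simp
  have "fle F (c q1 \<oplus> c q2) (x \<oplus> y)" using fle_trans[OF f _ _ _ 1 2] xy q by simp
  then show ?thesis using c_pl q by simp
qed

lemma fle_pl_c: "filt F \<Longrightarrow> x \<in> A \<Longrightarrow> y \<in> A \<Longrightarrow> 0 \<le> q1 \<Longrightarrow> q1 \<le> 1 \<Longrightarrow> 0 \<le> q2 \<Longrightarrow> q2 \<le> 1 \<Longrightarrow>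
  fle F x (c q1) \<Longrightarrow> fle F y (c q2) \<Longrightarrow> fle F (x \<oplus> y) (c (min (q1 + q2) 1))"
proof -
  assume f: "filt F" and xy: "x \<in> A" "y \<in> A" and q: "0 \<le> q1" "q1 \<le> 1" "0 \<le> q2" "q2 \<le> 1"
    and a: "fle F x (c q1)" and b: "fle F y (c q2)"
  have 1: "fle F (x \<oplus> y) (c q1 \<oplus> y)" using fle_pl[OF f _ _ _ a] xy q by simp
  have 2: "fle F (c q1 \<oplus> y) (c q1 \<oplus> c q2)" using fle_pl2[OF f _ _ _ b] xy q by simp
  have "fle F (x \<oplus> y) (c q1 \<oplus> c q2)" using fle_trans[OF f _ _ _ 1 2] xy q by simp
  then show ?thesis using c_pl q by simp
qed

lemma hF_pl: "F \<in> maxF \<Longrightarrow> x \<in> A \<Longrightarrow> y \<in> A \<Longrightarrow> hF F (x \<oplus> y) = min (hF F x + hF F y) 1"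
proof -
  assume M: "F \<in> maxF" and x: "x \<in> A" and y: "y \<in> A"
  have f: "filt F" "F \<noteq> A" using M maxF_filt_ne by auto
  define a where "a = hF F x"
  define b where "b = hF F y"
  have cx: "chr F x a" and cy: "chr F y b" using chr_hF M x y by (auto simp: a_def b_def)
  have ab: "0 \<le> a" "a \<le> 1" "0 \<le> b" "b \<le> 1" using cx cy by (auto simp: chr_def)
  have "chr F (x \<oplus> y) (min (a + b) 1)" unfolding chr_def
  proof (intro conjI allI impI)
    show "0 \<le> min (a + b) 1" "min (a + b) 1 \<le> 1" using ab by auto
  next
    fix q :: rat assume q: "0 \<le> q" "q \<le> 1" "of_rat q < min (a + b) 1"
    have "\<exists>q1 q2. 0 \<le> q1 \<and> q1 \<le> 1 \<and> 0 \<le> q2 \<and> q2 \<le> 1 \<and> fle F (c q1) x \<and> fle F (c q2) y \<and> q \<le> q1 + q2"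
    proof (cases "a = 0")
      case True
      then have "of_rat q < b" using q by simp
      then have "fle F (c q) y" using cy q by (auto simp: chr_def)
      moreover have "fle F (c 0) x" using fle_lq[OF f(1)] x by (simp add: c0)
      ultimately show ?thesis using q by (intro exI[of _ 0] exI[of _ q]) auto
    next
      case a0: False
      show ?thesis
      proof (cases "b = 0")
        case True
        then have "of_rat q < a" using q by simp
        then have "fle F (c q) x" using cx q by (auto simp: chr_def)
        moreover have "fle F (c 0) y" using fle_lq[OF f(1)] y by (simp add: c0)
        ultimately show ?thesis using q by (intro exI[of _ q] exI[of _ 0]) auto
      next
        case b0: False
        have "max 0 (of_rat q - b) < a" using q ab a0 by auto
        then obtain q1 where q1: "max 0 (of_rat q - b) < of_rat q1" "of_rat q1 < a" using of_rat_dense by blast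
        have r1: "0 \<le> q1" "q1 \<le> 1" using q1 ab rat_bounds by (meson max.cobounded1 le_less_trans less_imp_le)+
        define q2 where "q2 = max 0 (q - q1)"
        have omax: "\<And>u v. of_rat (max u v) = (max (of_rat u) (of_rat v) :: real)"
          by (simp add: max_def of_rat_less_eq)
        have "of_rat q2 = (max 0 (of_rat q - of_rat q1) :: real)" unfolding q2_def omax by (simp add: of_rat_diff)
        then have q2b: "of_rat q2 < b" using q1 ab b0 by auto
        have r2: "0 \<le> q2" "q2 \<le> 1" using q r1 by (auto simp: q2_def)
        have "fle F (c q1) x" using cx q1 r1 by (auto simp: chr_def)
        moreover have "fle F (c q2) y" using cy q2b r2 by (auto simp: chr_def)
        moreover have "q \<le> q1 + q2" by (simp add: q2_def)
        ultimately show ?thesis using r1 r2 by blast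
      qed
    qed
    then obtain q1 q2 where qq: "0 \<le> q1" "q1 \<le> 1" "0 \<le> q2" "q2 \<le> 1" "fle F (c q1) x" "fle F (c q2) y" "q \<le> q1 + q2"
      by blast
    have 1: "fle F (c (min (q1 + q2) 1)) (x \<oplus> y)" using fle_c_pl[OF f(1) x y] qq by blast
    have 2: "fle F (c q) (c (min (q1 + q2) 1))" using fle_c[OF f] q qq by auto
    show "fle F (c q) (x \<oplus> y)" using fle_trans[OF f(1) _ _ _ 2 1] q qq x y by simp
  next
    fix q :: rat assume q: "0 \<le> q" "q \<le> 1" "min (a + b) 1 < of_rat q"
    have "of_rat q \<le> (1::real)" using q(2) by (simp add: of_rat_le_1_iff)
    then have s: "a + b < of_rat q" using q(3) by (auto simp: min_def split: if_splits)
    then have h1: "a < of_rat q - b" by simp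
    obtain q1 where q1: "a < of_rat q1" "of_rat q1 < of_rat q - b" using of_rat_dense[OF h1] by blast
    then have h2: "b < of_rat q - of_rat q1" by simp
    obtain q2 where q2: "b < of_rat q2" "of_rat q2 < (of_rat q - of_rat q1 :: real)" using of_rat_dense[OF h2] by blast
    have r: "0 \<le> q1" "0 \<le> q2" using rat_bounds(1) ab q1 q2 by blast+
    have "of_rat q1 < (of_rat q :: real)" "of_rat q2 < (of_rat q :: real)" using q1 q2 ab r by auto
    then have r2: "q1 \<le> 1" "q2 \<le> 1" using q by (simp_all add: of_rat_less) 
    have "of_rat (q1 + q2) < (of_rat q :: real)" using q2 by (simp add: of_rat_add)
    then have qs: "q1 + q2 \<le> q" by (simp add: of_rat_less)
    have 1: "fle F (x \<oplus> y) (c (min (q1 + q2) 1))"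
      using fle_pl_c[OF f(1) x y] r r2 cx cy q1 q2 by (auto simp: chr_def)
    have 2: "fle F (c (min (q1 + q2) 1)) (c q)" using fle_c[OF f] q qs r r2 by auto
    show "fle F (x \<oplus> y) (c q)" using fle_trans[OF f(1) _ _ _ 1 2] q r r2 x y by simp
  qed
  then show ?thesis using hF_eq M x y by (simp add: a_def b_def)
qed

lemma hF_z: "F \<in> maxF \<Longrightarrow> hF F z = 0" using hF_c[of F 0] by (simp add: c0)
lemma hF_one: "F \<in> maxF \<Longrightarrow> hF F one = 1" using hF_ng[of F z] hF_z by simp

lemma hF_mul: "F \<in> maxF \<Longrightarrow> x \<in> A \<Longrightarrow> y \<in> A \<Longrightarrow> hF F (x \<odot> y) = max 0 (hF F x + hF F y - 1)"
  by (simp add: mul_def hF_ng hF_pl min_def max_def)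

lemma hF_pw: "F \<in> maxF \<Longrightarrow> x \<in> A \<Longrightarrow> hF F x = 1 \<Longrightarrow> hF F (pw x n) = 1"
  by (induction n) (simp_all add: hF_one hF_mul)

lemma hF_ker: "F \<in> maxF \<Longrightarrow> x \<in> A \<Longrightarrow> hF F x = 1 \<longleftrightarrow> x \<in> F"
proof
  assume M: "F \<in> maxF" and x: "x \<in> A"
  have f: "filt F" "F \<noteq> A" using M maxF_filt_ne by auto
  {
    assume h: "hF F x = 1"
    show "x \<in> F"
    proof (rule ccontr)
      assume "x \<notin> F"
      then obtain n where n: "ng (pw x n) \<in> F" using maxF_pw M x by blast
      have "hF F (ng (pw x n)) = 0" using hF_ng[OF M] hF_pw[OF M x h] x by simp
      moreover have "chr F (ng (pw x n)) 1" unfolding chr_def using fle_in[OF f(1) _ _ n] x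
        by (auto simp: of_rat_less_1_iff)
      then have "hF F (ng (pw x n)) = 1" using hF_eq M x by simp
      ultimately show False by simp
    qed
  }
  {
    assume xF: "x \<in> F"
    have "chr F x 1" unfolding chr_def using fle_in[OF f(1) x _ xF] by auto
    then show "hF F x = 1" using hF_eq M x by simp
  }
qed

lemma hF_hom: "F \<in> maxF \<Longrightarrow> std_hom A (\<oplus>) ng z (hF F)"
  unfolding std_hom_def using hF_range hF_z hF_ng hF_pl by simp

end


context pav begin

lemma hom_props: "std_hom A (\<oplus>) ng z h \<Longrightarrow>
   (\<forall>x\<in>A. 0 \<le> h x \<and> h x \<le> 1) \<and> h z = 0 \<and> (\<forall>x\<in>A. h (ng x) = 1 - h x) \<and>
   (\<forall>x\<in>A. \<forall>y\<in>A. h (x \<oplus> y) = min (h x + h y) 1)"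
  by (simp add: std_hom_def)

lemma hom_cm: "std_hom A (\<oplus>) ng z h \<Longrightarrow> 0 < m \<Longrightarrow> k \<le> m \<Longrightarrow>
   h (c (of_nat k / of_nat m)) = min 1 (of_nat k * h (c (1 / of_nat m)))"
proof (induction k)
  case 0 then show ?case using hom_props[OF 0(1)] by (simp add: c0)
next
  case (Suc k)
  have m: "0 < m" "k \<le> m" "Suc k \<le> m" using Suc.prems by auto
  have mq: "(0::rat) < of_nat m" using m by simp
  have b1: "0 \<le> (of_nat k / of_nat m :: rat)" "(of_nat k / of_nat m :: rat) \<le> 1" using m mq
    by (auto simp: divide_le_eq_1)
  have b2: "0 \<le> (1 / of_nat m :: rat)" "(1 / of_nat m :: rat) \<le> 1" using m mq by auto
  have e: "(of_nat (Suc k) / of_nat m :: rat) = of_nat k / of_nat m + 1 / of_nat m"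
    by (simp add: add_divide_distrib)
  have le1: "(of_nat (Suc k) / of_nat m :: rat) \<le> 1" using m mq by (simp add: divide_le_eq_1 del: of_nat_Suc)
  have "c (of_nat (Suc k) / of_nat m) = c (of_nat k / of_nat m) \<oplus> c (1 / of_nat m)"
    using c_pl[OF b1 b2] e le1 by simp
  then have "h (c (of_nat (Suc k) / of_nat m)) = min (h (c (of_nat k / of_nat m)) + h (c (1 / of_nat m))) 1"
    using hom_props[OF Suc.prems(1)] b1 b2 by simp
  also have "\<dots> = min (min 1 (of_nat k * h (c (1 / of_nat m))) + h (c (1 / of_nat m))) 1"
    using Suc m by simp
  also have "\<dots> = min 1 (of_nat (Suc k) * h (c (1 / of_nat m)))"
  proof -
    have "0 \<le> h (c (1 / of_nat m))" using hom_props[OF Suc.prems(1)] b2 by simp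
    then show ?thesis by (auto simp: min_def algebra_simps)
  qed
  finally show ?case .
qed

lemma hom_c1m: "std_hom A (\<oplus>) ng z h \<Longrightarrow> 0 < m \<Longrightarrow> h (c (1 / of_nat m)) = 1 / of_nat m"
proof -
  assume H: "std_hom A (\<oplus>) ng z h" and m: "0 < m"
  note hp = hom_props[OF H]
  show ?thesis
  proof (cases "m = 1")
    case True
    have "h (c 1) = 1" using hp by (simp add: c1)
    then show ?thesis using True by simp
  next
    case False
    then have m2: "2 \<le> m" using m by simp
    define t where "t = h (c (1 / of_nat m))"
    have mq: "(0::rat) < of_nat m" using m by simp
    have b2: "0 \<le> (1 / of_nat m :: rat)" "(1 / of_nat m :: rat) \<le> 1" using m mq by auto
    have t0: "0 \<le> t" using hp b2 by (simp add: t_def)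
    have "(of_nat (m - 1) / of_nat m :: rat) = 1 - 1 / of_nat m" using m mq by (simp add: of_nat_diff field_simps)
    then have "c (of_nat (m - 1) / of_nat m) = ng (c (1 / of_nat m))" using c_ng b2 by simp
    then have "h (c (of_nat (m - 1) / of_nat m)) = 1 - t" using hp b2 by (simp add: t_def)
    moreover have "h (c (of_nat (m - 1) / of_nat m)) = min 1 (of_nat (m - 1) * t)"
      using hom_cm[OF H m, of "m - 1"] by (simp add: t_def)
    ultimately have eq: "1 - t = min 1 (of_nat (m - 1) * t)" by simp
    have "of_nat (m - 1) * t < 1"
    proof (rule ccontr)
      assume "\<not> of_nat (m - 1) * t < 1"
      then have "t = 0" using eq m by (auto simp: min_def of_nat_diff split: if_splits)
      then show False using \<open>\<not> of_nat (m - 1) * t < 1\<close> by simp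
    qed
    then have "1 - t = of_nat (m - 1) * t" using eq by simp
    then have "of_nat m * t = 1" using m by (simp add: of_nat_diff algebra_simps)
    then have "t = 1 / of_nat m" using m by (simp add: field_simps)
    then show ?thesis by (simp add: t_def)
  qed
qed

lemma hom_c: "std_hom A (\<oplus>) ng z h \<Longrightarrow> 0 \<le> q \<Longrightarrow> q \<le> 1 \<Longrightarrow> h (c q) = of_rat q"
proof -
  assume H: "std_hom A (\<oplus>) ng z h" and q: "0 \<le> q" "q \<le> 1"
  obtain a b where ab: "quotient_of q = (a, b)" by (cases "quotient_of q") auto
  have qd: "q = of_int a / of_int b" using quotient_of_div[OF ab] .
  have b0: "0 < b" using quotient_of_denom_pos[OF ab] .
  have a0: "0 \<le> a" using q qd b0 by (simp add: zero_le_divide_iff)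
  have ab1: "a \<le> b" using q qd b0 by (simp add: divide_le_eq_1)
  define k where "k = nat a"
  define m where "m = nat b"
  have km: "k \<le> m" "0 < m" using a0 ab1 b0 by (auto simp: k_def m_def)
  have qkm: "q = of_nat k / of_nat m" using qd a0 b0 by (simp add: k_def m_def)
  have "h (c q) = min 1 (of_nat k * (1 / of_nat m))"
    using hom_cm[OF H km(2) km(1)] hom_c1m[OF H km(2)] qkm by simp
  also have "\<dots> = of_nat k / of_nat m" using km by (simp add: divide_le_eq_1)
  also have "\<dots> = of_rat q" using qkm by (simp add: of_rat_divide)
  finally show ?thesis .
qed

lemma hom_imp: "std_hom A (\<oplus>) ng z h \<Longrightarrow> x \<in> A \<Longrightarrow> y \<in> A \<Longrightarrow> h (imp x y) = min (1 - h x + h y) 1"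
  using hom_props by (simp add: imp_def)

lemma hom_unique: "F \<in> maxF \<Longrightarrow> std_hom A (\<oplus>) ng z h \<Longrightarrow> {y \<in> A. h y = 1} = F \<Longrightarrow> x \<in> A \<Longrightarrow> h x = hF F x"
proof -
  assume M: "F \<in> maxF" and H: "std_hom A (\<oplus>) ng z h" and K: "{y \<in> A. h y = 1} = F" and x: "x \<in> A"
  note hp = hom_props[OF H]
  have "chr F x (h x)" unfolding chr_def
  proof (intro conjI allI impI)
    show "0 \<le> h x" "h x \<le> 1" using hp x by auto
  next
    fix q assume q: "0 \<le> q" "q \<le> 1" "of_rat q < h x"
    have "h (imp (c q) x) = 1" using hom_imp[OF H _ x, of "c q"] hom_c[OF H q(1,2)] q by simp
    then show "fle F (c q) x" using K x q by (auto simp: fle_def)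
  next
    fix q assume q: "0 \<le> q" "q \<le> 1" "h x < of_rat q"
    have "h (imp x (c q)) = 1" using hom_imp[OF H x, of "c q"] hom_c[OF H q(1,2)] q by simp
    then show "fle F x (c q)" using K x q by (auto simp: fle_def)
  qed
  then show ?thesis using hF_eq M x by simp
qed

lemma hF_kerset: "F \<in> maxF \<Longrightarrow> {y \<in> A. hF F y = 1} = F"
  using hF_ker maxF_sub by blast

lemma qv_eq: "F \<in> maxF \<Longrightarrow> x \<in> A \<Longrightarrow> quot_val A (\<oplus>) ng z F x = hF F x"
  unfolding quot_val_def
proof (rule the_equality)
  assume M: "F \<in> maxF" and x: "x \<in> A"
  show "\<exists>h. std_hom A (\<oplus>) ng z h \<and> {y \<in> A. h y = 1} = F \<and> h x = hF F x"
    using hF_hom[OF M] hF_kerset[OF M] by blast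
  fix v assume "\<exists>h. std_hom A (\<oplus>) ng z h \<and> {y \<in> A. h y = 1} = F \<and> h x = v"
  then show "v = hF F x" using hom_unique[OF M _ _ x] by blast
qed

lemma hF_imp: "F \<in> maxF \<Longrightarrow> x \<in> A \<Longrightarrow> y \<in> A \<Longrightarrow> hF F (imp x y) = min (1 - hF F x + hF F y) 1"
  using hom_imp hF_hom by blast

lemma hF_mt: "F \<in> maxF \<Longrightarrow> x \<in> A \<Longrightarrow> y \<in> A \<Longrightarrow> hF F (mt x y) = min (hF F x) (hF F y)"
  using hF_range[of F x] hF_range[of F y] by (simp add: mt_eq hF_mul hF_pl hF_ng min_def max_def)

lemma hF_mono: "F \<in> maxF \<Longrightarrow> x \<in> A \<Longrightarrow> y \<in> A \<Longrightarrow> x \<preceq> y \<Longrightarrow> hF F x \<le> hF F y"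
proof -
  assume M: "F \<in> maxF" and x: "x \<in> A" and y: "y \<in> A" and l: "x \<preceq> y"
  have "imp x y = one" using l x y by (simp add: imp_one_iff)
  then have "min (1 - hF F x + hF F y) 1 = 1" using hF_imp[OF M x y] hF_one[OF M] by simp
  then show ?thesis by (simp add: min_def split: if_splits)
qed

lemma ss_le: "semisimple A (\<oplus>) ng z \<Longrightarrow> x \<in> A \<Longrightarrow> y \<in> A \<Longrightarrow> (\<forall>F\<in>maxF. hF F x \<le> hF F y) \<Longrightarrow> x \<preceq> y"
proof -
  assume S: "semisimple A (\<oplus>) ng z" and x: "x \<in> A" and y: "y \<in> A" and H: "\<forall>F\<in>maxF. hF F x \<le> hF F y"
  have "\<forall>F\<in>maxF. imp x y \<in> F"
  proof
    fix F assume M: "F \<in> maxF"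
    have "hF F (imp x y) = 1" using hF_imp[OF M x y] H M by simp
    then show "imp x y \<in> F" using hF_ker[OF M] x y by simp
  qed
  then have "imp x y \<in> {x \<in> A. \<forall>F\<in>maxF. x \<in> F}" using x y by simp
  then have "imp x y = one" using S unfolding semisimple_def by blast
  then show ?thesis using x y by (simp add: imp_one_iff)
qed

lemma ss_eq: "semisimple A (\<oplus>) ng z \<Longrightarrow> x \<in> A \<Longrightarrow> y \<in> A \<Longrightarrow> (\<forall>F\<in>maxF. hF F x = hF F y) \<Longrightarrow> x = y"
  using ss_le lq_antisym by (metis order_refl)

end


locale tns = pav +
  fixes G H :: "'a \<Rightarrow> 'a"
  assumes tp: "tense_pavelka A (\<oplus>) ng c G H" and ss: "semisimple A (\<oplus>) ng z"
begin

lemma GA[simp]: "x \<in> A \<Longrightarrow> G x \<in> A" using tp by (simp add: tense_pavelka_def)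
lemma HA[simp]: "x \<in> A \<Longrightarrow> H x \<in> A" using tp by (simp add: tense_pavelka_def)
lemma G_mt: "x \<in> A \<Longrightarrow> y \<in> A \<Longrightarrow> G (mt x y) = mt (G x) (G y)" using tp by (simp add: tense_pavelka_def)
lemma G_imp_c: "0 \<le> r \<Longrightarrow> r \<le> 1 \<Longrightarrow> x \<in> A \<Longrightarrow> imp (c r) (G x) = G (imp (c r) x)"
  using tp by (simp add: tense_pavelka_def)
lemma PT3a: "x \<in> A \<Longrightarrow> ng (H (ng (G x))) \<preceq> x" using tp by (simp add: tense_pavelka_def zc)
lemma PT3b: "x \<in> A \<Longrightarrow> ng (G (ng (H x))) \<preceq> x" using tp by (simp add: tense_pavelka_def zc)

lemma tns_swap: "tns A (\<oplus>) ng z c H G"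
proof -
  have "tense_pavelka A (\<oplus>) ng c H G" using tp unfolding tense_pavelka_def by blast
  then show ?thesis unfolding tns_def tns_axioms_def pav_def pav_axioms_def mvl_def
    using mvalg pav zc ss by blast
qed

lemma G_mono: "x \<in> A \<Longrightarrow> y \<in> A \<Longrightarrow> x \<preceq> y \<Longrightarrow> G x \<preceq> G y"
proof -
  assume x: "x \<in> A" and y: "y \<in> A" and l: "x \<preceq> y"
  have "G x = mt (G x) (G y)" using G_mt[OF x y] mt_lq_eq[OF x y l] by simp
  then show ?thesis using mt_lb2[of "G x" "G y"] x y by simp
qed

lemma G_shift: "0 \<le> s \<Longrightarrow> s \<le> 1 \<Longrightarrow> x \<in> A \<Longrightarrow> G (c s \<oplus> x) = c s \<oplus> G x"
proof -
  assume s: "0 \<le> s" "s \<le> 1" and x: "x \<in> A"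
  have e: "\<And>u. u \<in> A \<Longrightarrow> imp (c (1 - s)) u = c s \<oplus> u" using s by (simp add: imp_def c_ng)
  have "imp (c (1 - s)) (G x) = G (imp (c (1 - s)) x)" using G_imp_c[of "1 - s" x] s x by simp
  then show ?thesis using e x by simp
qed

lemma G_one: "G one = one"
proof -
  have "G (c 1 \<oplus> z) = c 1 \<oplus> G z" using G_shift[of 1 z] by simp
  then show ?thesis by (simp add: c1)
qed

abbreviation phi where "phi F w \<equiv> hF F (G w)"

lemma luk_imp_bnd: "0 \<le> u \<Longrightarrow> u \<le> 1 \<Longrightarrow> 0 \<le> v \<Longrightarrow> v \<le> 1 \<Longrightarrow> 0 \<le> luk_imp u v \<and> luk_imp u v \<le> 1"
  by (simp add: luk_imp_def)

definition Rl where "Rl F F' = (INF a\<in>A. luk_imp (hF F' (G a)) (hF F a))"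

lemma Rl_bdd: "F \<in> maxF \<Longrightarrow> F' \<in> maxF \<Longrightarrow> bdd_below ((\<lambda>a. luk_imp (hF F' (G a)) (hF F a)) ` A)"
  by (rule bdd_belowI[of _ 0]) (use hF_range luk_imp_bnd in fastforce)

lemma Rl_le: "F \<in> maxF \<Longrightarrow> F' \<in> maxF \<Longrightarrow> a \<in> A \<Longrightarrow> Rl F F' \<le> luk_imp (hF F' (G a)) (hF F a)"
  unfolding Rl_def using Rl_bdd by (rule cINF_lower)

lemma Rl_ge: assumes "\<And>a. a \<in> A \<Longrightarrow> t \<le> luk_imp (hF F' (G a)) (hF F a)" shows "t \<le> Rl F F'"
  unfolding Rl_def
proof (rule cINF_greatest)
  show "A \<noteq> {}" using zA by blast
qed (rule assms)

lemma Rl_lt: "F \<in> maxF \<Longrightarrow> F' \<in> maxF \<Longrightarrow> Rl F F' < t \<Longrightarrow> \<exists>a\<in>A. luk_imp (hF F' (G a)) (hF F a) < t"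
  unfolding Rl_def using cINF_less_iff[OF _ Rl_bdd] zA by blast

lemma Rl_range: "F \<in> maxF \<Longrightarrow> F' \<in> maxF \<Longrightarrow> 0 \<le> Rl F F' \<and> Rl F F' \<le> 1"
proof -
  assume M: "F \<in> maxF" "F' \<in> maxF"
  have "Rl F F' \<le> luk_imp (hF F' (G z)) (hF F z)" using Rl_le M by simp
  also have "\<dots> \<le> 1" by (simp add: luk_imp_def)
  finally have 1: "Rl F F' \<le> 1" .
  have "0 \<le> Rl F F'" using M hF_range luk_imp_bnd by (intro Rl_ge) auto
  then show ?thesis using 1 by simp
qed

lemma Rl_time: "F \<in> maxF \<Longrightarrow> F' \<in> maxF \<Longrightarrow> time_rel A (\<oplus>) ng z G F F' = Rl F F'"
  unfolding time_rel_def Rl_def using qv_eq by (intro INF_cong) auto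

lemma Rl_ineq: "F \<in> maxF \<Longrightarrow> F' \<in> maxF \<Longrightarrow> a \<in> A \<Longrightarrow> Rl F F' + hF F' (G a) - 1 \<le> hF F a"
  using Rl_le[of F F' a] hF_range[of F a] by (simp add: luk_imp_def)

lemma rep_easy: "F \<in> maxF \<Longrightarrow> F' \<in> maxF \<Longrightarrow> y \<in> A \<Longrightarrow> phi F y \<le> luk_imp (Rl F' F) (hF F' y)"
  using Rl_ineq[of F' F y] hF_range[of F "G y"] by (simp add: luk_imp_def)

definition RlH where "RlH F F' = (INF b\<in>A. luk_imp (hF F (H b)) (hF F' b))"

lemma RlH_bdd: "F \<in> maxF \<Longrightarrow> F' \<in> maxF \<Longrightarrow> bdd_below ((\<lambda>b. luk_imp (hF F (H b)) (hF F' b)) ` A)"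
  by (rule bdd_belowI[of _ 0]) (use hF_range luk_imp_bnd in fastforce)

lemma Rl_RlH: "F \<in> maxF \<Longrightarrow> F' \<in> maxF \<Longrightarrow> Rl F F' = RlH F F'"
proof (rule antisym)
  assume M: "F \<in> maxF" "F' \<in> maxF"
  show "Rl F F' \<le> RlH F F'" unfolding RlH_def using zA
  proof (intro cINF_greatest)
    fix b assume b: "b \<in> A"
    have "Rl F F' \<le> luk_imp (hF F' (G (ng (H b)))) (hF F (ng (H b)))" using Rl_le M b by simp
    moreover have "hF F' (ng (G (ng (H b)))) \<le> hF F' b" using hF_mono[OF M(2) _ b PT3b[OF b]] b by simp
    ultimately show "Rl F F' \<le> luk_imp (hF F (H b)) (hF F' b)"
      using M b hF_ng by (auto simp: luk_imp_def)
  qed (use zA in blast)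
  show "RlH F F' \<le> Rl F F'" unfolding Rl_def using zA
  proof (intro cINF_greatest)
    fix a assume a: "a \<in> A"
    have "RlH F F' \<le> luk_imp (hF F (H (ng (G a)))) (hF F' (ng (G a)))"
      unfolding RlH_def using cINF_lower[OF RlH_bdd[OF M]] a by simp
    moreover have "hF F (ng (H (ng (G a)))) \<le> hF F a" using hF_mono[OF M(1) _ a PT3a[OF a]] a by simp
    ultimately show "RlH F F' \<le> luk_imp (hF F' (G a)) (hF F a)"
      using M a hF_ng by (auto simp: luk_imp_def)
  qed (use zA in blast)
qed

lemma refl_iff: "(\<forall>F\<in>maxF. Rl F F = 1) \<longleftrightarrow> (\<forall>x\<in>A. G x \<preceq> x)"
proof
  assume R: "\<forall>F\<in>maxF. Rl F F = 1"
  show "\<forall>x\<in>A. G x \<preceq> x"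
  proof
    fix x assume x: "x \<in> A"
    have "\<forall>F\<in>maxF. hF F (G x) \<le> hF F x" using Rl_ineq R x by fastforce
    then show "G x \<preceq> x" using ss_le[OF ss] x by simp
  qed
next
  assume L: "\<forall>x\<in>A. G x \<preceq> x"
  show "\<forall>F\<in>maxF. Rl F F = 1"
  proof
    fix F assume M: "F \<in> maxF"
    have "1 \<le> Rl F F"
    proof (rule Rl_ge)
      fix a assume a: "a \<in> A"
      have "hF F (G a) \<le> hF F a" using hF_mono[OF M] L a by simp
      then show "1 \<le> luk_imp (hF F (G a)) (hF F a)" by (simp add: luk_imp_def)
    qed
    then show "Rl F F = 1" using Rl_range[OF M M] by simp
  qed
qed

lemma trans_if: "(\<forall>x\<in>A. G x \<preceq> G (G x)) \<Longrightarrow>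
   (\<forall>s\<in>maxF. \<forall>t\<in>maxF. \<forall>u\<in>maxF. luk_mult (Rl s t) (Rl t u) \<le> Rl s u)"
proof (intro ballI)
  assume L: "\<forall>x\<in>A. G x \<preceq> G (G x)"
  fix s t u assume M: "s \<in> maxF" "t \<in> maxF" "u \<in> maxF"
  show "luk_mult (Rl s t) (Rl t u) \<le> Rl s u"
  proof (rule Rl_ge)
    fix a assume a: "a \<in> A"
    have 1: "Rl t u + hF u (G (G a)) - 1 \<le> hF t (G a)" using Rl_ineq M a by simp
    have 2: "Rl s t + hF t (G a) - 1 \<le> hF s a" using Rl_ineq M a by simp
    have 3: "hF u (G a) \<le> hF u (G (G a))" using hF_mono[OF M(3)] L a by simp
    have r: "0 \<le> Rl s t" "Rl s t \<le> 1" "0 \<le> Rl t u" "Rl t u \<le> 1" using Rl_range M by auto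
    have r2: "0 \<le> hF s a" "hF u (G a) \<le> 1" using hF_range M a by auto
    show "luk_mult (Rl s t) (Rl t u) \<le> luk_imp (hF u (G a)) (hF s a)"
      using 1 2 3 r r2 by (simp add: luk_mult_def luk_imp_def)
  qed
qed

lemma sym_if: "(\<forall>x\<in>A. H x = G x) \<Longrightarrow> F \<in> maxF \<Longrightarrow> F' \<in> maxF \<Longrightarrow> Rl F F' = Rl F' F"
proof -
  assume E: "\<forall>x\<in>A. H x = G x" and M: "F \<in> maxF" "F' \<in> maxF"
  have "Rl F F' = RlH F F'" using Rl_RlH M by simp
  also have "\<dots> = Rl F' F" unfolding RlH_def Rl_def using E by (intro INF_cong) auto
  finally show ?thesis .
qed

end


context tns begin

lemma phi_shift: "F \<in> maxF \<Longrightarrow> 0 \<le> s \<Longrightarrow> s \<le> 1 \<Longrightarrow> a \<in> A \<Longrightarrow> phi F (c s \<oplus> a) = min (of_rat s + phi F a) 1"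
  using G_shift hF_pl hF_c by simp

lemma phi_c: "F \<in> maxF \<Longrightarrow> 0 \<le> q \<Longrightarrow> q \<le> 1 \<Longrightarrow> of_rat q \<le> phi F (c q)"
proof -
  assume M: "F \<in> maxF" and q: "0 \<le> q" "q \<le> 1"
  have "phi F (c q \<oplus> z) = min (of_rat q + phi F z) 1" using phi_shift[OF M q(1) q(2) zA] .
  moreover have "c q \<oplus> z = c q" using q by simp
  ultimately have "phi F (c q) = min (of_rat q + phi F z) 1" by simp
  moreover have "0 \<le> phi F z" using hF_range M by simp
  moreover have "(of_rat q :: real) \<le> 1" using q by (simp add: of_rat_le_1_iff)
  ultimately show ?thesis by linarith
qed

lemma phi_down: "F \<in> maxF \<Longrightarrow> 0 \<le> s \<Longrightarrow> s \<le> 1 \<Longrightarrow> a \<in> A \<Longrightarrow> phi F a - of_rat s \<le> phi F (a \<odot> c (1 - s))"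
proof -
  assume M: "F \<in> maxF" and s: "0 \<le> s" "s \<le> 1" and a: "a \<in> A"
  let ?w = "a \<odot> c (1 - s)"
  have wA: "?w \<in> A" using a s by simp
  have "a \<preceq> c s \<oplus> ?w"
  proof -
    have "\<forall>F'\<in>maxF. hF F' a \<le> hF F' (c s \<oplus> ?w)"
    proof
      fix F' assume M': "F' \<in> maxF"
      have "hF F' (c s \<oplus> ?w) = min (of_rat s + max 0 (hF F' a + (1 - of_rat s) - 1)) 1"
        using M' a s by (simp add: hF_pl hF_mul hF_c of_rat_diff)
      then show "hF F' a \<le> hF F' (c s \<oplus> ?w)" using hF_range[OF M' a] by (auto simp: min_def max_def)
    qed
    then show ?thesis using ss_le[OF ss] a wA s by simp
  qed
  then have "G a \<preceq> G (c s \<oplus> ?w)" using G_mono a wA s by simp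
  then have "phi F a \<le> phi F (c s \<oplus> ?w)" using hF_mono[OF M] a wA s by simp
  also have "\<dots> = min (of_rat s + phi F ?w) 1" using phi_shift M s wA by simp
  finally show ?thesis by linarith
qed

lemma list_lift: "set es \<subseteq> f ` W \<Longrightarrow> \<exists>ws. set ws \<subseteq> W \<and> es = map f ws"
proof (induction es)
  case Nil then show ?case by auto
next
  case (Cons e es)
  then obtain ws where "set ws \<subseteq> W" "es = map f ws" by auto
  moreover obtain w where "w \<in> W" "e = f w" using Cons.prems by auto
  ultimately show ?case by (intro exI[of _ "w # ws"]) auto
qed

definition Mt where "Mt ws = foldr mt ws one"
lemma MtA: "set ws \<subseteq> A \<Longrightarrow> Mt ws \<in> A" unfolding Mt_def by (induction ws) auto
lemma Mt_lq: "set ws \<subseteq> A \<Longrightarrow> w \<in> set ws \<Longrightarrow> Mt ws \<preceq> w"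
proof (induction ws)
  case Nil then show ?case by simp
next
  case (Cons v ws)
  have mA: "Mt ws \<in> A" using Cons.prems MtA by simp
  have e: "Mt (v # ws) = mt v (Mt ws)" by (simp add: Mt_def)
  show ?case
  proof (cases "w = v")
    case True then show ?thesis using e mA Cons.prems by (simp add: mt_lb1)
  next
    case False
    then have "Mt ws \<preceq> w" using Cons by simp
    moreover have "mt v (Mt ws) \<preceq> Mt ws" using mA Cons.prems by (simp add: mt_lb2)
    ultimately show ?thesis using e mA Cons.prems by (metis lq_trans mtA list.set_intros(1) subsetD set_subset_Cons)
  qed
qed
lemma phi_Mt: "F \<in> maxF \<Longrightarrow> set ws \<subseteq> A \<Longrightarrow> \<theta> < 1 \<Longrightarrow> (\<forall>w\<in>set ws. \<theta> < phi F w) \<Longrightarrow> \<theta> < phi F (Mt ws)"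
proof (induction ws)
  case Nil then show ?case using hF_one G_one by (simp add: Mt_def)
next
  case (Cons v ws)
  have mA: "Mt ws \<in> A" using Cons.prems MtA by simp
  have "phi F (Mt (v # ws)) = min (phi F v) (phi F (Mt ws))"
    using Cons.prems mA by (simp add: Mt_def G_mt hF_mt)
  then show ?case using Cons by simp
qed

lemma rep_hard: "F \<in> maxF \<Longrightarrow> y \<in> A \<Longrightarrow> 0 < \<epsilon> \<Longrightarrow> \<exists>F'\<in>maxF. luk_imp (Rl F' F) (hF F' y) < phi F y + \<epsilon>"
proof -
  assume M: "F \<in> maxF" and y: "y \<in> A" and ep: "0 < \<epsilon>"
  define p where "p = phi F y"
  show ?thesis
  proof (cases "1 < p + \<epsilon>")
    case True
    then show ?thesis using M by (intro bexI[of _ F]) (auto simp: luk_imp_def p_def)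
  next
    case False
    then have pe: "p + \<epsilon> \<le> 1" by simp
    have p0: "0 \<le> p" "p \<le> 1" using hF_range M y by (auto simp: p_def)
    show ?thesis
    proof (rule ccontr)
      assume "\<not> ?thesis"
      then have N: "\<And>F'. F' \<in> maxF \<Longrightarrow> p + \<epsilon> \<le> luk_imp (Rl F' F) (hF F' y)" by (auto simp: p_def not_less)
      have "(0::real) < min (\<epsilon> / 4) 1" using ep by simp
      then obtain \<delta> where d: "0 < (of_rat \<delta> :: real)" "of_rat \<delta> < min (\<epsilon> / 4) 1" using of_rat_dense by blast
      have dr: "0 \<le> \<delta>" "\<delta> \<le> 1" using rat_bounds(1)[of 0 \<delta>] rat_bounds(2)[of \<delta> 1] d by auto
      define y' where "y' = c \<delta> \<oplus> y"
      have y'A: "y' \<in> A" using dr y by (simp add: y'_def)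
      define \<theta> where "\<theta> = p + \<epsilon> / 4"
      have vy': "\<And>F'. F' \<in> maxF \<Longrightarrow> hF F' y' = min (of_rat \<delta> + hF F' y) 1"
        using dr y by (simp add: y'_def hF_pl hF_c)
      have C: "\<forall>F'\<in>maxF. \<exists>w\<in>{w \<in> A. \<theta> < phi F w}. imp y' w \<notin> F'"
      proof
        fix F' assume M': "F' \<in> maxF"
        define v where "v = hF F'"
        have h1: "0 < of_rat \<delta> + hF F' y" "hF F' y \<le> of_rat \<delta> + hF F' y" using d(1) hF_range[OF M' y] by linarith+
        have vyy: "v y \<le> v y'" "0 < v y'" using vy'[OF M'] h1 hF_range[OF M' y] by (auto simp: v_def)
        have "\<exists>w\<in>A. \<theta> < phi F w \<and> v w < v y'"
        proof (cases "p + \<epsilon> / 2 < v y")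
          case True
          then have "\<theta> < v y" using ep by (simp add: \<theta>_def)
          then obtain q where q: "\<theta> < of_rat q" "of_rat q < v y" using of_rat_dense by blast
          have qa: "0 \<le> \<theta>" using p0 ep by (simp add: \<theta>_def)
          have qb: "v y \<le> 1" using hF_range[OF M' y] by (simp add: v_def)
          have qr: "0 \<le> q" "q \<le> 1" using rat_bounds(1)[OF qa q(1)] rat_bounds(2)[OF q(2) qb] by auto
          have "\<theta> < phi F (c q)" using phi_c[OF M qr] q by simp
          moreover have "v (c q) < v y'" using hF_c[OF M' qr] q vyy by (simp add: v_def)
          ultimately show ?thesis using qr by (intro bexI[of _ "c q"]) auto
        next
          case False
          then have vyl: "v y \<le> p + \<epsilon> / 2" by simp
          have "p + \<epsilon> \<le> luk_imp (Rl F' F) (v y)" using N M' by (simp add: v_def)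
          then have "Rl F' F \<le> 1 - p - \<epsilon> + v y" using pe by (simp add: luk_imp_def)
          then have "Rl F' F < 1 - p - 3 * \<epsilon> / 4 + v y" using ep by simp
          then obtain a where a: "a \<in> A" "luk_imp (hF F (G a)) (hF F' a) < 1 - p - 3 * \<epsilon> / 4 + v y"
            using Rl_lt[OF M' M] by blast
          have "1 - p - 3 * \<epsilon> / 4 + v y < 1" using vyl ep by simp
          then have key: "v a - phi F a < v y - p - 3 * \<epsilon> / 4" using a by (simp add: luk_imp_def v_def)
          have ra: "0 \<le> v a" "v a \<le> 1" "0 \<le> phi F a" "phi F a \<le> 1" using hF_range M M' a by (auto simp: v_def)
          show ?thesis
          proof (cases "phi F a \<le> p + \<epsilon> / 2")
            case True
            define \<sigma> where "\<sigma> = p + \<epsilon> / 2 - phi F a"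
            have "max 0 (\<sigma> - \<epsilon> / 8) < min (\<sigma> + \<epsilon> / 8) 1" using True ep pe ra unfolding \<sigma>_def by auto
            then obtain s where s: "max 0 (\<sigma> - \<epsilon> / 8) < of_rat s" "of_rat s < min (\<sigma> + \<epsilon> / 8) 1"
              using of_rat_dense by blast
            have sr: "0 \<le> s" "s \<le> 1" using rat_bounds(1)[of 0 s] rat_bounds(2)[of s 1] s by auto
            define w where "w = c s \<oplus> a"
            have wA: "w \<in> A" using a sr by (simp add: w_def)
            have "v w = min (of_rat s + v a) 1" using hF_pl[OF M'] hF_c[OF M'] a sr by (simp add: w_def v_def)
            then have "v w < v y" using s key unfolding \<sigma>_def by auto
            moreover have "phi F w = min (of_rat s + phi F a) 1" using phi_shift M sr a by (simp add: w_def)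
            then have "\<theta> < phi F w" using s pe ep unfolding \<sigma>_def \<theta>_def by auto
            ultimately show ?thesis using wA vyy by (intro bexI[of _ w]) auto
          next
            case False
            define t where "t = phi F a - p - \<epsilon> / 2"
            have t: "0 < t" "t < 1" using False ra p0 ep by (auto simp: t_def)
            have "t < min (t + \<epsilon> / 8) 1" using t ep by simp
            then obtain s where s: "t < of_rat s" "of_rat s < min (t + \<epsilon> / 8) 1" using of_rat_dense by blast
            have s0: "(0::real) < of_rat s" using s t by linarith
            have sr: "0 \<le> s" "s \<le> 1" using rat_bounds(1)[of 0 s] rat_bounds(2)[of s 1] s s0 by auto
            define w where "w = a \<odot> c (1 - s)"
            have wA: "w \<in> A" using a sr by (simp add: w_def)
            have "v w = max 0 (v a + (1 - of_rat s) - 1)"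
              using hF_mul[OF M'] hF_c[OF M'] a sr by (simp add: w_def v_def of_rat_diff)
            then have "v w < v y'" using s key vyy unfolding t_def by auto
            moreover have "phi F a - of_rat s \<le> phi F w" using phi_down[OF M sr a(1)] by (simp add: w_def)
            then have "\<theta> < phi F w" using s unfolding t_def \<theta>_def by auto
            ultimately show ?thesis using wA by (intro bexI[of _ w]) auto
          qed
        qed
        then obtain w where w: "w \<in> A" "\<theta> < phi F w" "v w < v y'" by blast
        have "hF F' (imp y' w) = min (1 - v y' + v w) 1" using hF_imp[OF M' y'A w(1)] by (simp add: v_def)
        then have "hF F' (imp y' w) \<noteq> 1" using w by simp
        then have "imp y' w \<notin> F'" using hF_ker[OF M'] y'A w by auto
        then show "\<exists>w\<in>{w \<in> A. \<theta> < phi F w}. imp y' w \<notin> F'" using w by blast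
      qed
      let ?W = "{w \<in> A. \<theta> < phi F w}"
      have C1: "\<forall>F'\<in>maxF. \<exists>e\<in>(imp y') ` ?W. e \<notin> F'" using C by blast
      have C2: "(imp y') ` ?W \<subseteq> A" using y'A by auto
      obtain es where es: "set es \<subseteq> (imp y') ` ?W" "\<forall>F'\<in>maxF. \<exists>e\<in>set es. e \<notin> F'"
        using compact[OF C2 C1] by blast
      obtain ws where ws: "set ws \<subseteq> ?W" "es = map (imp y') ws" using list_lift[OF es(1)] by blast
      have wsA: "set ws \<subseteq> A" using ws by auto
      have mA: "Mt ws \<in> A" using MtA wsA by simp
      have "\<forall>F'\<in>maxF. hF F' (Mt ws) \<le> hF F' y'"
      proof
        fix F' assume M': "F' \<in> maxF"
        obtain w where w: "w \<in> set ws" "imp y' w \<notin> F'" using es(2) M' ws(2) by auto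
        have wA: "w \<in> A" using w wsA by auto
        have "hF F' (imp y' w) \<noteq> 1" using hF_ker[OF M'] w y'A wA by simp
        then have "hF F' w < hF F' y'" using hF_imp[OF M' y'A wA] by (auto simp: min_def split: if_splits)
        moreover have "hF F' (Mt ws) \<le> hF F' w" using hF_mono[OF M' mA wA] Mt_lq[OF wsA w(1)] by simp
        ultimately show "hF F' (Mt ws) \<le> hF F' y'" by simp
      qed
      then have "Mt ws \<preceq> y'" using ss_le[OF ss] mA y'A by simp
      then have "phi F (Mt ws) \<le> phi F y'" using hF_mono[OF M] G_mono mA y'A by simp
      also have "\<dots> = min (of_rat \<delta> + p) 1" using phi_shift[OF M dr y] by (simp add: y'_def p_def)
      also have "\<dots> < \<theta>" using d unfolding \<theta>_def by auto
      finally have lt: "phi F (Mt ws) < \<theta>" .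
      have "\<theta> < 1" using pe ep by (simp add: \<theta>_def)
      then have "\<theta> < phi F (Mt ws)" using phi_Mt[OF M wsA] ws(1) by auto
      then show False using lt by simp
    qed
  qed
qed

end


context tns begin

lemma sym_only_if:
  assumes sym: "\<forall>F\<in>maxF. \<forall>F'\<in>maxF. Rl F F' = Rl F' F"
  shows "\<forall>x\<in>A. H x = G x"
proof -
  interpret sw: tns A "(\<oplus>)" ng z c H G by (rule tns_swap)
  have swR: "\<And>F F'. F \<in> maxF \<Longrightarrow> F' \<in> maxF \<Longrightarrow> sw.Rl F F' = Rl F' F"
  proof -
    fix F F' assume M: "F \<in> maxF" "F' \<in> maxF"
    have "sw.Rl F F' = RlH F' F" unfolding sw.Rl_def RlH_def by simp
    then show "sw.Rl F F' = Rl F' F" using Rl_RlH M by simp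
  qed
  have le: "hF F (G x) \<le> hF F (H x)" "hF F (H x) \<le> hF F (G x)" if M: "F \<in> maxF" and x: "x \<in> A" for F x
  proof -
    show "hF F (G x) \<le> hF F (H x)"
    proof (rule field_le_epsilon)
      fix e :: real assume e: "0 < e"
      obtain F' where F': "F' \<in> maxF" "luk_imp (sw.Rl F' F) (hF F' x) < hF F (H x) + e"
        using sw.rep_hard[OF M x e] by blast
      have "sw.Rl F' F = Rl F' F" using swR F' M sym by simp
      then show "hF F (G x) \<le> hF F (H x) + e" using rep_easy[OF M F'(1) x] F' by simp
    qed
    show "hF F (H x) \<le> hF F (G x)"
    proof (rule field_le_epsilon)
      fix e :: real assume e: "0 < e"
      obtain F' where F': "F' \<in> maxF" "luk_imp (Rl F' F) (hF F' x) < hF F (G x) + e"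
        using rep_hard[OF M x e] by blast
      have "sw.Rl F' F = Rl F' F" using swR F' M sym by simp
      then show "hF F (H x) \<le> hF F (G x) + e" using sw.rep_easy[OF M F'(1) x] F' by simp
    qed
  qed
  show ?thesis
  proof
    fix x assume x: "x \<in> A"
    have "\<forall>F\<in>maxF. hF F (H x) = hF F (G x)" using le x by (meson antisym)
    then show "H x = G x" using ss_eq[OF ss] x by simp
  qed
qed

lemma trans_only_if:
  assumes T: "\<forall>s\<in>maxF. \<forall>t\<in>maxF. \<forall>u\<in>maxF. luk_mult (Rl s t) (Rl t u) \<le> Rl s u"
  shows "\<forall>x\<in>A. G x \<preceq> G (G x)"
proof
  fix x assume x: "x \<in> A"
  have "\<forall>F\<in>maxF. hF F (G x) \<le> hF F (G (G x))"
  proof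
    fix F assume M: "F \<in> maxF"
    show "hF F (G x) \<le> hF F (G (G x))"
    proof (rule ccontr)
      assume "\<not> ?thesis"
      then have lt: "hF F (G (G x)) < hF F (G x)" by simp
      define e where "e = (hF F (G x) - hF F (G (G x))) / 2"
      have e: "0 < e" using lt by (simp add: e_def)
      obtain F' where F': "F' \<in> maxF" "luk_imp (Rl F' F) (hF F' (G x)) < hF F (G (G x)) + e"
        using rep_hard[OF M GA[OF x] e] by blast
      obtain F'' where F'': "F'' \<in> maxF" "luk_imp (Rl F'' F') (hF F'' x) < hF F' (G x) + e"
        using rep_hard[OF F'(1) x e] by blast
      have 3: "hF F (G x) \<le> luk_imp (Rl F'' F) (hF F'' x)" using rep_easy[OF M F''(1) x] .
      have 4: "luk_mult (Rl F'' F') (Rl F' F) \<le> Rl F'' F" using T F' F'' M by blast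
      have r: "0 \<le> Rl F' F" "Rl F' F \<le> 1" "0 \<le> Rl F'' F'" "Rl F'' F' \<le> 1" "0 \<le> Rl F'' F" "Rl F'' F \<le> 1"
        using Rl_range M F' F'' by auto
      have r2: "hF F (G x) \<le> 1" "0 \<le> hF F' (G x)" "hF F' (G x) \<le> 1" "0 \<le> hF F'' x" "hF F'' x \<le> 1"
        using hF_range M F' F'' x by auto
      define a where "a = Rl F' F"
      define b where "b = Rl F'' F'"
      define R2 where "R2 = Rl F'' F"
      define w where "w = hF F'' x"
      define g' where "g' = hF F' (G x)"
      define g where "g = hF F (G x)"
      define gg where "gg = hF F (G (G x))"
      have f1: "1 < gg + e \<or> 1 - a + g' < gg + e" using F'(2) unfolding luk_imp_def a_def g'_def gg_def
        by (simp add: min_less_iff_disj)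
      have f2: "1 < g' + e \<or> 1 - b + w < g' + e" using F''(2) unfolding luk_imp_def b_def g'_def w_def
        by (simp add: min_less_iff_disj)
      have f3: "g \<le> 1 - R2 + w" using 3 unfolding luk_imp_def R2_def g_def w_def by simp
      have f4: "b + a - 1 \<le> R2" using 4 unfolding luk_mult_def a_def b_def R2_def by simp
      have ee: "e * 2 = g - gg" "g \<le> 1" "a \<le> 1" using e_def r2 r by (auto simp: g_def gg_def a_def)
      show False using f1 f2 f3 f4 ee e by (elim disjE; linarith)
    qed
  qed
  then show "G x \<preceq> G (G x)" using ss_le[OF ss] x by simp
qed

lemma main_G:
  "(fuzzy_refl maxF (time_rel A (\<oplus>) ng z G) \<longleftrightarrow> (\<forall>x\<in>A. G x \<preceq> x)) \<and>
   (fuzzy_sym maxF (time_rel A (\<oplus>) ng z G) \<longleftrightarrow> (\<forall>x\<in>A. H x = G x)) \<and>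
   (fuzzy_trans maxF (time_rel A (\<oplus>) ng z G) \<longleftrightarrow> (\<forall>x\<in>A. G x \<preceq> G (G x)))"
proof (intro conjI)
  have "fuzzy_refl maxF (time_rel A (\<oplus>) ng z G) \<longleftrightarrow> (\<forall>F\<in>maxF. Rl F F = 1)"
    unfolding fuzzy_refl_def using Rl_time by simp
  then show "fuzzy_refl maxF (time_rel A (\<oplus>) ng z G) \<longleftrightarrow> (\<forall>x\<in>A. G x \<preceq> x)" using refl_iff by simp
  have "fuzzy_sym maxF (time_rel A (\<oplus>) ng z G) \<longleftrightarrow> (\<forall>F\<in>maxF. \<forall>F'\<in>maxF. Rl F F' = Rl F' F)"
    unfolding fuzzy_sym_def using Rl_time by simp
  then show "fuzzy_sym maxF (time_rel A (\<oplus>) ng z G) \<longleftrightarrow> (\<forall>x\<in>A. H x = G x)"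
    using sym_only_if sym_if by blast
  have "fuzzy_trans maxF (time_rel A (\<oplus>) ng z G) \<longleftrightarrow>
      (\<forall>s\<in>maxF. \<forall>t\<in>maxF. \<forall>u\<in>maxF. luk_mult (Rl s t) (Rl t u) \<le> Rl s u)"
    unfolding fuzzy_trans_def using Rl_time by simp
  then show "fuzzy_trans maxF (time_rel A (\<oplus>) ng z G) \<longleftrightarrow> (\<forall>x\<in>A. G x \<preceq> G (G x))"
    using trans_only_if trans_if by blast
qed

lemma time_swap: "F \<in> maxF \<Longrightarrow> F' \<in> maxF \<Longrightarrow> time_rel A (\<oplus>) ng z H F F' = time_rel A (\<oplus>) ng z G F' F"
proof -
  assume M: "F \<in> maxF" "F' \<in> maxF"
  have "time_rel A (\<oplus>) ng z H F F' = RlH F' F"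
    unfolding time_rel_def RlH_def using qv_eq M by (intro INF_cong) auto
  also have "\<dots> = Rl F' F" using Rl_RlH M by simp
  also have "\<dots> = time_rel A (\<oplus>) ng z G F' F" using Rl_time M by simp
  finally show ?thesis .
qed

end

theorem theorem13:
  fixes A :: "'a set" and oplus :: "'a \<Rightarrow> 'a \<Rightarrow> 'a" and neg :: "'a \<Rightarrow> 'a"
    and c :: "rat \<Rightarrow> 'a" and G H :: "'a \<Rightarrow> 'a"
  assumes "tense_pavelka A oplus neg c G H"
    and "semisimple A oplus neg (c 0)"
  defines "S \<equiv> max_filters A oplus neg (c 0)"
    and "R \<equiv> time_rel A oplus neg (c 0) G"
    and "le \<equiv> mv_le oplus neg (c 0)"
  shows "(fuzzy_refl S R \<longleftrightarrow> (\<forall>x\<in>A. le (G x) x)) \<and>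
         (fuzzy_refl S R \<longleftrightarrow> (\<forall>x\<in>A. le (H x) x)) \<and>
         (fuzzy_sym S R \<longleftrightarrow> (\<forall>x\<in>A. H x = G x)) \<and>
         (fuzzy_trans S R \<longleftrightarrow> (\<forall>x\<in>A. le (G x) (G (G x)))) \<and>
         (fuzzy_trans S R \<longleftrightarrow> (\<forall>x\<in>A. le (H x) (H (H x))))"
proof -
  have pv: "pavelka_algebra A oplus neg c" using assms(1) by (simp add: tense_pavelka_def)
  then have mv: "mv_algebra A oplus neg (c 0)" by (simp add: pavelka_algebra_def)
  interpret T: tns A oplus neg "c 0" c G H
    unfolding tns_def tns_axioms_def pav_def pav_axioms_def mvl_def using mv pv assms(1,2) by blast
  interpret T2: tns A oplus neg "c 0" c H G by (rule T.tns_swap)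
  note m1 = T.main_G and m2 = T2.main_G
  have sw: "\<And>F F'. F \<in> S \<Longrightarrow> F' \<in> S \<Longrightarrow> time_rel A oplus neg (c 0) H F F' = R F' F"
    unfolding S_def R_def using T.time_swap by blast
  have refl_eq: "fuzzy_refl S R \<longleftrightarrow> fuzzy_refl S (time_rel A oplus neg (c 0) H)"
    unfolding fuzzy_refl_def using sw by auto
  have trans_eq: "fuzzy_trans S R \<longleftrightarrow> fuzzy_trans S (time_rel A oplus neg (c 0) H)"
  proof
    assume a: "fuzzy_trans S R"
    show "fuzzy_trans S (time_rel A oplus neg (c 0) H)" unfolding fuzzy_trans_def
    proof (intro ballI)
      fix s t u assume stu: "s \<in> S" "t \<in> S" "u \<in> S"
      have "luk_mult (R u t) (R t s) \<le> R u s" using a stu unfolding fuzzy_trans_def by blast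
      then show "luk_mult (time_rel A oplus neg (c 0) H s t) (time_rel A oplus neg (c 0) H t u)
                 \<le> time_rel A oplus neg (c 0) H s u"
        using sw stu by (simp add: luk_mult_def add.commute)
    qed
  next
    assume a: "fuzzy_trans S (time_rel A oplus neg (c 0) H)"
    show "fuzzy_trans S R" unfolding fuzzy_trans_def
    proof (intro ballI)
      fix s t u assume stu: "s \<in> S" "t \<in> S" "u \<in> S"
      have "luk_mult (time_rel A oplus neg (c 0) H u t) (time_rel A oplus neg (c 0) H t s)
            \<le> time_rel A oplus neg (c 0) H u s" using a stu unfolding fuzzy_trans_def by blast
      then show "luk_mult (R s t) (R t u) \<le> R s u"
        using sw stu by (simp add: luk_mult_def add.commute)
    qed
  qed
  show ?thesis
    using m1 m2 refl_eq trans_eq unfolding S_def R_def le_def by simp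
qed


end
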